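(* For every integer $n\ge0$, $$\sum_{m\ge0}\frac{m^n}{n+1}\binom{m+n}{m}t^m=\frac{\overline{Q}_n(t)}{(1-t)^{2n+1}},$$ where $\overline{Q}_n(t)=\sum_{\pi}t^{\operatorname{des}(\pi)}$, the sum ranging over all quasi-Stirling permutations $\pi$ of size $n$.
   Context: A quasi-Stirling permutation of size $n$ is a permutation $\pi_1\cdots\pi_{2n}$ of the multiset $\{1,1,2,2,\dots,n,n\}$ with no indices $i<j<k<\ell$ such that $\pi_i=\pi_k$ and $\pi_j=\pi_\ell$ (for $n=0$ only the empty permutation). For a sequence $\pi_1\cdots\pi_r$, an index $i\in\{1,\dots,r\}$ is a descent if $\pi_i>\pi_{i+1}$ or $i=r$, and $\operatorname{des}$ counts descents. The identity is one of formal power series in $t$, with the convention $0^0=1$. *)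

theory Defs
  imports Main "HOL-Library.Multiset" "HOL-Computational_Algebra.Formal_Power_Series"
begin

definition quasi_stirling :: "nat \<Rightarrow> nat list set" where
  "quasi_stirling n = {w. mset w = mset [1..<n+1] + mset [1..<n+1] \<and>
     \<not> (\<exists>i j k l. i < j \<and> j < k \<and> k < l \<and> l < length w \<and>
            w ! i = w ! k \<and> w ! j = w ! l)}"

text \<open>Descents: position i (1-based, 1..r) is a descent if w_i > w_{i+1} or i = r.
  Here positions are 0-based: i < length w.\<close>
definition des :: "nat list \<Rightarrow> nat" where
  "des w = card {i. i < length w \<and> (i = length w - 1 \<or> w ! i > w ! (i + 1))}"

definition Qbar :: "nat \<Rightarrow> rat fps" where
  "Qbar n = (\<Sum>w\<in>quasi_stirling n. fps_X ^ des w)"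

end

theory Submission
  imports Defs "HOL-Computational_Algebra.Formal_Laurent_Series" "HOL-Library.Product_Lexorder"
begin

unbundle fps_syntax

lemma lag_H_coeff:
  fixes F :: "'a::field_char_0 fps"
  assumes F0: "F $ 0 \<noteq> 0" and j: "j \<ge> 1"
  shows "(F ^ j * (1 - fps_X * fps_deriv F * inverse F)) $ j = 0"
proof -
  have FG: "F * inverse F = 1" using F0 by (simp add: inverse_mult_eq_1')
  have "F ^ j * (1 - fps_X * fps_deriv F * inverse F) = F ^ j - fps_X * (F ^ (j - 1) * fps_deriv F)"
  proof -
    have "F ^ j = F ^ (j - 1) * F" using j by (metis Suc_diff_le diff_Suc_1 power_Suc2)
    then have "F ^ j * (fps_X * fps_deriv F * inverse F) = fps_X * (F ^ (j - 1) * fps_deriv F) * (F * inverse F)"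
      by (simp add: algebra_simps)
    then have "F ^ j * (fps_X * fps_deriv F * inverse F) = fps_X * (F ^ (j - 1) * fps_deriv F)"
      using FG by simp
    then show ?thesis by (simp add: right_diff_distrib)
  qed
  moreover have "(fps_X * (F ^ (j - 1) * fps_deriv F)) $ j = (F ^ j) $ j"
  proof -
    have e: "F ^ (j - 1) * fps_deriv F = fps_const (1 / of_nat j) * fps_deriv (F ^ j)"
    proof -
      have "fps_const (1 / of_nat j) * fps_deriv (F ^ j) = (fps_const (1 / of_nat j) * fps_const (of_nat j)) * (F ^ (j - 1) * fps_deriv F)"
        by (simp add: fps_deriv_power algebra_simps)
      also have "fps_const (1 / of_nat j) * fps_const (of_nat j) = (1 :: 'a fps)"
        using j by simp
      finally show ?thesis by simp
    qed
    have "(fps_X * (F ^ (j - 1) * fps_deriv F)) $ j = (F ^ (j - 1) * fps_deriv F) $ (j - 1)"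
      using fps_X_power_mult_nth[of 1 "F ^ (j - 1) * fps_deriv F" j] j by simp
    also have "\<dots> = (F ^ j) $ j"
      unfolding e using j by simp
    finally show ?thesis .
  qed
  ultimately show ?thesis by simp
qed

lemma lag_term:
  fixes F :: "'a::field_char_0 fps"
  assumes F0: "F $ 0 \<noteq> 0" and nN: "n \<le> N" and N: "1 \<le> N"
  shows "(fps_deriv ((fps_X * inverse F) ^ n) * F ^ N) $ (N - 1) = (if n = N then of_nat N else 0)"
proof (cases "n = 0")
  case True
  then show ?thesis using N by simp
next
  case False
  define G where "G = inverse F"
  define H where "H = 1 - fps_X * fps_deriv F * G"
  have GF: "G * F = 1" using F0 unfolding G_def by (simp add: inverse_mult_eq_1)
  have dG: "fps_deriv G = - fps_deriv F * G ^ 2" using F0 unfolding G_def by (simp add: fps_inverse_deriv)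
  have pw: "G ^ n * F ^ n = 1" using GF by (metis power_mult_distrib power_one)
  have FN: "F ^ N = F ^ n * F ^ (N - n)" using nN by (simp flip: power_add)
  have "fps_deriv ((fps_X * G) ^ n) = fps_const (of_nat n) * fps_deriv (fps_X * G) * (fps_X * G) ^ (n - 1)"
    by (simp add: fps_deriv_power)
  also have "\<dots> = fps_const (of_nat n) * fps_X ^ (n - 1) * (G ^ (n - 1) * (G + fps_X * fps_deriv G))"
    by (simp add: power_mult_distrib algebra_simps)
  finally have d: "fps_deriv ((fps_X * G) ^ n) * F ^ N = fps_const (of_nat n) * (fps_X ^ (n - 1) * (G ^ (n - 1) * (G + fps_X * fps_deriv G) * F ^ N))"
    by (simp add: algebra_simps)
  have G1: "G ^ (n - 1) * G = G ^ n" using False by (metis Suc_diff_1 not_gr_zero power_Suc2)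
  have "G ^ (n - 1) * (G + fps_X * fps_deriv G) * F ^ N = (G ^ n * F ^ n) * F ^ (N - n) - fps_X * fps_deriv F * G * (G ^ n * F ^ n) * F ^ (N - n)"
    unfolding dG FN using G1 by (simp add: algebra_simps power2_eq_square)
  also have "\<dots> = F ^ (N - n) * H" unfolding pw H_def by (simp add: algebra_simps)
  finally have e: "fps_deriv ((fps_X * G) ^ n) * F ^ N = fps_const (of_nat n) * (fps_X ^ (n - 1) * (F ^ (N - n) * H))"
    using d by simp
  have "(fps_deriv ((fps_X * G) ^ n) * F ^ N) $ (N - 1) = of_nat n * (F ^ (N - n) * H) $ (N - n)"
    unfolding e using nN False by (simp add: fps_X_power_mult_nth)
  moreover have "(F ^ (N - n) * H) $ (N - n) = (if n = N then 1 else 0)"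
  proof (cases "n = N")
    case True
    then show ?thesis by (simp add: H_def)
  next
    case False
    then show ?thesis using lag_H_coeff[OF F0, of "N - n"] nN unfolding H_def G_def by simp
  qed
  ultimately show ?thesis unfolding G_def by simp
qed

lemma lagrange:
  fixes F :: "'a::field_char_0 fps"
  assumes F0: "F $ 0 \<noteq> 0" and k: "1 \<le> k" "k \<le> N"
  shows "of_nat N * (fps_inv (fps_X * inverse F) ^ k) $ N = of_nat k * (F ^ N) $ (N - k)"
proof -
  define a where "a = fps_X * inverse F"
  define T where "T = fps_inv a"
  define c where "c n = (T ^ k) $ n" for n
  have a0: "a $ 0 = 0" by (simp add: a_def)
  have a1: "a $ 1 \<noteq> 0" using F0 by (simp add: a_def)
  have comp: "T ^ k oo a = fps_X ^ k"
    using fps_compose_power[OF a0, of T k] fps_inv[OF a0 a1] by (simp add: T_def)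
  define S where "S = (\<Sum>n=0..N. fps_const (c n) * a ^ n)"
  have Sj: "S $ j = (fps_X ^ k) $ j" if j: "j \<le> N" for j
  proof -
    have "(fps_X ^ k) $ j = (T ^ k oo a) $ j" by (simp add: comp)
    also have "\<dots> = (\<Sum>i=0..j. c i * (a ^ i) $ j)" by (simp add: fps_compose_nth c_def)
    also have "\<dots> = (\<Sum>i=0..N. c i * (a ^ i) $ j)"
    proof (rule sum.mono_neutral_left)
      show "\<forall>i\<in>{0..N} - {0..j}. c i * (a ^ i) $ j = 0"
        using startsby_zero_power_prefix[OF a0] by auto
    qed (use j in auto)
    also have "\<dots> = S $ j" by (simp add: S_def fps_sum_nth)
    finally show ?thesis by simp
  qed
  define R where "R = fps_X ^ k - S"
  have dR: "fps_deriv R $ j = 0" if "j < N" for j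
    using Sj[of "Suc j"] that by (simp add: R_def)
  have "(fps_deriv R * F ^ N) $ (N - 1) = 0"
    unfolding fps_mult_nth using dR k by (intro sum.neutral) auto
  then have eq: "(fps_deriv (fps_X ^ k) * F ^ N) $ (N - 1) = (fps_deriv S * F ^ N) $ (N - 1)"
    by (simp add: R_def algebra_simps)
  have dX: "fps_deriv ((fps_X :: 'a fps) ^ k) = fps_const (of_nat k) * fps_X ^ (k - 1)"
    using fps_deriv_power[of "fps_X :: 'a fps" k] by simp
  have "fps_deriv (fps_X ^ k) * F ^ N = fps_const (of_nat k) * (fps_X ^ (k - 1) * F ^ N)"
    unfolding dX by (simp add: mult.assoc)
  then have lhs: "(fps_deriv (fps_X ^ k) * F ^ N) $ (N - 1) = of_nat k * (F ^ N) $ (N - k)"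
    using k by (simp only: fps_mult_left_const_nth fps_X_power_mult_nth) (simp add: diff_diff_eq2)
  have "fps_deriv S * F ^ N = (\<Sum>n=0..N. fps_const (c n) * (fps_deriv (a ^ n) * F ^ N))"
    by (simp add: S_def fps_deriv_sum sum_distrib_left sum_distrib_right mult.assoc mult.left_commute)
  then have "(fps_deriv S * F ^ N) $ (N - 1) = (\<Sum>n=0..N. c n * (if n = N then of_nat N else 0))"
    using lag_term[OF F0 _ ] k unfolding a_def by (simp add: fps_sum_nth)
  also have "\<dots> = (\<Sum>n = 0..N. (if n = N then c N * of_nat N else 0))"
    by (intro sum.cong) auto
  also have "\<dots> = c N * of_nat N" by simp
  finally show ?thesis using eq lhs by (simp add: c_def T_def a_def mult.commute)
qed

lemma lag_conv:
  fixes F :: "'a::field_char_0 fps"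
  assumes F0: "F $ 0 \<noteq> 0"
  shows "(\<Sum>j=0..n. (F ^ (j + 1)) $ j / of_nat (j + 1) * ((F ^ (n - j + 1)) $ (n - j) / of_nat (n - j + 1)))
         = 2 * (F ^ (n + 2)) $ n / of_nat (n + 2)"
proof -
  define T where "T = fps_inv (fps_X * inverse F)"
  have T0: "T $ 0 = 0" by (simp add: T_def fps_inv_def)
  have T1: "T $ N = (F ^ N) $ (N - 1) / of_nat N" if "N \<ge> 1" for N
    using lagrange[OF F0, of 1 N] that unfolding T_def by (simp add: field_simps)
  have T2: "(T ^ 2) $ (n + 2) = 2 * (F ^ (n + 2)) $ n / of_nat (n + 2)"
  proof -
    have nz: "(of_nat (n + 2) :: 'a) \<noteq> 0" by (simp only: of_nat_eq_0_iff)
    have "of_nat (n + 2) * (T ^ 2) $ (n + 2) = of_nat 2 * (F ^ (n + 2)) $ (n + 2 - 2)"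
      using lagrange[OF F0, of 2 "n + 2"] unfolding T_def by simp
    then show ?thesis using nz by (simp add: eq_divide_eq mult.commute)
  qed
  have "(T ^ 2) $ (n + 2) = (\<Sum>i=0..n+2. T $ i * T $ (n + 2 - i))"
    by (simp add: power2_eq_square fps_mult_nth)
  also have "\<dots> = (\<Sum>i=1..n+1. T $ i * T $ (n + 2 - i))"
  proof (rule sum.mono_neutral_right)
    show "\<forall>i\<in>{0..n + 2} - {1..n + 1}. T $ i * T $ (n + 2 - i) = 0"
    proof
      fix i assume "i \<in> {0..n + 2} - {1..n + 1}"
      then have "i = 0 \<or> i = n + 2" by auto
      then show "T $ i * T $ (n + 2 - i) = 0" using T0 by auto
    qed
  qed auto
  also have "\<dots> = (\<Sum>j=0..n. T $ (j + 1) * T $ (n - j + 1))"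
    by (rule sum.reindex_bij_witness[of _ "\<lambda>j. j + 1" "\<lambda>i. i - 1"]) (auto simp: Suc_diff_le)
  also have "\<dots> = (\<Sum>j=0..n. (F ^ (j + 1)) $ j / of_nat (j + 1) * ((F ^ (n - j + 1)) $ (n - j) / of_nat (n - j + 1)))"
    by (intro sum.cong refl) (simp add: T1)
  finally show ?thesis using T2 by simp
qed


definition Pser :: "nat \<Rightarrow> nat \<Rightarrow> rat fps" where
  "Pser k j = Abs_fps (\<lambda>m. of_nat m ^ j * of_nat ((m + k - 1) choose m) / fact j)"

lemma hockey: "(\<Sum>p=0..m. ((m - p + k - 1) choose (m - p))) = (m + k) choose m"
proof -
  have "(\<Sum>p=0..m. ((m - p + k - 1) choose (m - p))) = (\<Sum>q=0..m. ((q + k - 1) choose q))"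
    by (rule sum.reindex_bij_witness[of _ "\<lambda>q. m - q" "\<lambda>p. m - p"]) auto
  also have "\<dots> = (m + k) choose m"
  proof (cases k)
    case 0
    have "(\<Sum>q=0..m. ((q + k - 1) choose q)) = (\<Sum>q=0..m. (if q = 0 then 1 else 0))"
      using 0 by (intro sum.cong) auto
    also have "\<dots> = 1" by simp
    finally show ?thesis using 0 by simp
  next
    case (Suc r)
    have "(\<Sum>q=0..m. ((q + k - 1) choose q)) = (\<Sum>q\<le>m. ((r + q) choose q))"
      using Suc by (simp add: atLeast0AtMost add.commute)
    also have "\<dots> = Suc (r + m) choose m" by (rule sum_choose_lower)
    also have "\<dots> = (m + k) choose m" using Suc by (simp add: add.commute)
    finally show ?thesis .
  qed
  finally show ?thesis .
qed

lemma binom_sum_fact: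
  fixes a b :: rat
  shows "(\<Sum>i=0..j. a ^ i / fact i * (b ^ (j - i) / fact (j - i))) = (a + b) ^ j / fact j"
proof -
  have "(a + b) ^ j = (\<Sum>i\<le>j. of_nat (j choose i) * a ^ i * b ^ (j - i))"
    by (simp add: binomial_ring)
  also have "\<dots> = (\<Sum>i=0..j. fact j * (a ^ i / fact i * (b ^ (j - i) / fact (j - i))))"
    by (intro sum.cong) (auto simp: binomial_fact atLeast0AtMost)
  also have "\<dots> = fact j * (\<Sum>i=0..j. a ^ i / fact i * (b ^ (j - i) / fact (j - i)))"
    by (simp add: sum_distrib_left)
  finally show ?thesis by (simp add: field_simps)
qed

lemma Pser_mult: "(\<Sum>i=0..j. Pser 1 i * Pser k (j - i)) = Pser (k + 1) j"
proof (rule fps_ext)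
  fix m
  have "(\<Sum>i=0..j. Pser 1 i * Pser k (j - i)) $ m
      = (\<Sum>i=0..j. \<Sum>p=0..m. (of_nat p ^ i / fact i) * (of_nat (m - p) ^ (j - i) * of_nat ((m - p + k - 1) choose (m - p)) / fact (j - i)))"
    by (simp add: fps_sum_nth fps_mult_nth Pser_def)
  also have "\<dots> = (\<Sum>p=0..m. of_nat ((m - p + k - 1) choose (m - p)) * (\<Sum>i=0..j. (of_nat p ^ i / fact i) * (of_nat (m - p) ^ (j - i) / fact (j - i))))"
    by (subst sum.swap) (simp add: sum_distrib_left mult_ac)
  also have "\<dots> = (\<Sum>p=0..m. of_nat ((m - p + k - 1) choose (m - p)) * (of_nat m ^ j / fact j))"
  proof (intro sum.cong refl)
    fix p assume "p \<in> {0..m}"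
    then have "of_nat p + of_nat (m - p) = (of_nat m :: rat)" by (simp flip: of_nat_add)
    then show "of_nat ((m - p + k - 1) choose (m - p)) * (\<Sum>i=0..j. (of_nat p ^ i / fact i) * (of_nat (m - p) ^ (j - i) / fact (j - i)))
       = of_nat ((m - p + k - 1) choose (m - p)) * (of_nat m ^ j / (fact j :: rat))"
      by (subst binom_sum_fact) simp
  qed
  also have "\<dots> = of_nat (\<Sum>p=0..m. ((m - p + k - 1) choose (m - p))) * (of_nat m ^ j / fact j)"
    by (simp only: of_nat_sum sum_distrib_right)
  also have "\<dots> = of_nat ((m + k) choose m) * (of_nat m ^ j / fact j)"
    by (simp only: hockey)
  also have "\<dots> = Pser (k + 1) j $ m" by (simp add: Pser_def)
  finally show "(\<Sum>i=0..j. Pser 1 i * Pser k (j - i)) $ m = Pser (k + 1) j $ m" .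
qed

lemma fps_to_fls_sum: "fps_to_fls (sum f A) = (\<Sum>i\<in>A. fps_to_fls (f i))"
  by (induction A rule: infinite_finite_induct) auto

lemma Pser0: "Pser 0 j = (if j = 0 then 1 else 0)"
proof (rule fps_ext)
  fix m show "Pser 0 j $ m = (if j = 0 then 1 else 0) $ m"
    by (cases m; cases j) (auto simp: Pser_def)
qed

definition Fy :: "rat fls fps" where "Fy = Abs_fps (\<lambda>j. fps_to_fls (Pser 1 j))"

lemma Fy_nth: "Fy $ i = fps_to_fls (Pser 1 i)"
  by (simp add: Fy_def)

lemma Fy_pow: "(Fy ^ k) $ j = fps_to_fls (Pser k j)"
proof (induction k arbitrary: j)
  case 0
  then show ?case by (simp add: Pser0)
next
  case (Suc k)
  have "(Fy ^ Suc k) $ j = (\<Sum>i=0..j. Fy $ i * (Fy ^ k) $ (j - i))"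
    by (simp add: fps_mult_nth)
  also have "\<dots> = (\<Sum>i=0..j. fps_to_fls (Pser 1 i * Pser k (j - i)))"
    by (simp only: Suc Fy_nth fls_times_fps_to_fls)
  also have "\<dots> = fps_to_fls (Pser (Suc k) j)"
    using Pser_mult[where j=j and k=k] by (simp flip: fps_to_fls_sum)
  finally show ?case .
qed

lemma fls_div_nat: "fps_to_fls A / (of_nat c :: rat fls) = fps_to_fls (fps_const (1 / of_nat c) * A)"
  by (simp add: divide_inverse fls_inverse_of_nat fls_times_fps_to_fls mult.commute)

lemma Pser_conv:
  "(\<Sum>j=0..n. fps_const (1 / of_nat (j + 1)) * Pser (j + 1) j * (fps_const (1 / of_nat (n - j + 1)) * Pser (n - j + 1) (n - j)))
    = 2 * (fps_const (1 / of_nat (n + 2)) * Pser (n + 2) n)"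
proof -
  have F0: "Fy $ 0 \<noteq> 0"
  proof
    assume "Fy $ 0 = 0"
    then have "Pser 1 0 = 0" by (simp add: Fy_def)
    then have "Pser 1 0 $ 0 = 0" by simp
    then show False by (simp add: Pser_def)
  qed
  have "fps_to_fls (\<Sum>j=0..n. fps_const (1 / of_nat (j + 1)) * Pser (j + 1) j * (fps_const (1 / of_nat (n - j + 1)) * Pser (n - j + 1) (n - j)))
      = (\<Sum>j=0..n. (Fy ^ (j + 1)) $ j / of_nat (j + 1) * ((Fy ^ (n - j + 1)) $ (n - j) / of_nat (n - j + 1)))"
    unfolding Fy_pow fls_div_nat by (simp only: fps_to_fls_sum fls_times_fps_to_fls)
  also have "\<dots> = 2 * (Fy ^ (n + 2)) $ n / of_nat (n + 2)"
    by (rule lag_conv[OF F0])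
  also have "\<dots> = 2 * (fps_to_fls (Pser (n + 2) n) / of_nat (n + 2))"
    unfolding Fy_pow by simp
  also have "\<dots> = fps_to_fls (2 * (fps_const (1 / of_nat (n + 2)) * Pser (n + 2) n))"
    unfolding fls_div_nat fls_times_fps_to_fls by simp
  finally show ?thesis by simp
qed

definition g1 :: "nat \<Rightarrow> nat \<Rightarrow> rat" where
  "g1 j p = of_nat p ^ j * of_nat ((p + j) choose p) / of_nat (j + 1)"

lemma g1_conv:
  "(\<Sum>j=0..n. of_nat (n choose j) * (\<Sum>p=0..m. g1 j p * g1 (n - j) (m - p)))
     = 2 * of_nat m ^ n * of_nat ((m + n + 1) choose m) / of_nat (n + 2)"
proof -
  have "(\<Sum>j=0..n. fps_const (1 / of_nat (j + 1)) * Pser (j + 1) j * (fps_const (1 / of_nat (n - j + 1)) * Pser (n - j + 1) (n - j))) $ m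
      = (2 * (fps_const (1 / of_nat (n + 2)) * Pser (n + 2) n)) $ m"
    by (simp only: Pser_conv)
  moreover have "(\<Sum>j=0..n. fps_const (1 / of_nat (j + 1)) * Pser (j + 1) j * (fps_const (1 / of_nat (n - j + 1)) * Pser (n - j + 1) (n - j))) $ m
      = (\<Sum>j=0..n. \<Sum>p=0..m. (g1 j p / fact j) * (g1 (n - j) (m - p) / fact (n - j)))"
  proof -
    have "(\<Sum>j=0..n. fps_const (1 / of_nat (j + 1)) * Pser (j + 1) j * (fps_const (1 / of_nat (n - j + 1)) * Pser (n - j + 1) (n - j))) $ m
      = (\<Sum>j=0..n. (1 / of_nat (j + 1)) * (1 / of_nat (n - j + 1)) * (\<Sum>p=0..m. Pser (j + 1) j $ p * Pser (n - j + 1) (n - j) $ (m - p)))"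
    proof -
      have r: "fps_const a * A * (fps_const b * B) = fps_const (a * b) * (A * B)" for a b :: rat and A B
        by (simp add: mult_ac flip: fps_const_mult)
      show ?thesis unfolding r fps_sum_nth fps_mult_left_const_nth
        by (simp only: fps_mult_nth)
    qed
    also have "\<dots> = (\<Sum>j=0..n. \<Sum>p=0..m. (g1 j p / fact j) * (g1 (n - j) (m - p) / fact (n - j)))"
    proof (intro sum.cong refl)
      fix j assume j: "j \<in> {0..n}"
      have "(1 / of_nat (j + 1)) * (1 / of_nat (n - j + 1)) * (\<Sum>p=0..m. Pser (j + 1) j $ p * Pser (n - j + 1) (n - j) $ (m - p))
          = (\<Sum>p=0..m. (1 / of_nat (j + 1) * Pser (j + 1) j $ p) * (1 / of_nat (n - j + 1) * Pser (n - j + 1) (n - j) $ (m - p)))"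
        by (simp add: sum_distrib_left mult_ac)
      also have "\<dots> = (\<Sum>p=0..m. (g1 j p / fact j) * (g1 (n - j) (m - p) / fact (n - j)))"
        by (intro sum.cong refl) (simp add: Pser_def g1_def add.commute)
      finally show "(1 / of_nat (j + 1)) * (1 / of_nat (n - j + 1)) * (\<Sum>p=0..m. Pser (j + 1) j $ p * Pser (n - j + 1) (n - j) $ (m - p))
          = (\<Sum>p=0..m. (g1 j p / fact j) * (g1 (n - j) (m - p) / fact (n - j)))" .
    qed
    finally show ?thesis .
  qed
  moreover have "(2 * (fps_const (1 / of_nat (n + 2)) * Pser (n + 2) n)) $ m
      = 2 * (of_nat m ^ n * of_nat ((m + n + 1) choose m) / fact n) / of_nat (n + 2)"
    by (simp add: Pser_def fps_numeral_fps_const mult.assoc[symmetric] fps_const_mult)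
  ultimately have e: "(\<Sum>j=0..n. \<Sum>p=0..m. (g1 j p / fact j) * (g1 (n - j) (m - p) / fact (n - j)))
      = 2 * (of_nat m ^ n * of_nat ((m + n + 1) choose m) / fact n) / of_nat (n + 2)"
    by simp
  have "(\<Sum>j=0..n. of_nat (n choose j) * (\<Sum>p=0..m. g1 j p * g1 (n - j) (m - p)))
      = fact n * (\<Sum>j=0..n. \<Sum>p=0..m. (g1 j p / fact j) * (g1 (n - j) (m - p) / fact (n - j)))"
    by (simp add: sum_distrib_left binomial_fact field_simps)
  also have "\<dots> = fact n * (2 * (of_nat m ^ n * of_nat ((m + n + 1) choose m) / fact n) / of_nat (n + 2))"
    unfolding e ..
  also have "\<dots> = 2 * of_nat m ^ n * of_nat ((m + n + 1) choose m) / of_nat (n + 2)"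
  proof -
    have aux: "f * (2 * (A / f) / c) = 2 * A / c" if "f \<noteq> 0" for f A c :: rat
      using that by simp
    show ?thesis by (simp only: aux[OF fact_nonzero] mult.assoc)
  qed
  finally show ?thesis .
qed

lemma g1_rec:
  "g1 (Suc n) m = (\<Sum>k=0..m. of_nat (m - k) * (\<Sum>j=0..n. of_nat (n choose j) * (g1 j k * g1 (n - j) (m - k))))"
proof -
  define S where "S = (\<Sum>k=0..m. of_nat (m - k) * (\<Sum>j=0..n. of_nat (n choose j) * (g1 j k * g1 (n - j) (m - k))))"
  define S' where "S' = (\<Sum>k=0..m. of_nat k * (\<Sum>j=0..n. of_nat (n choose j) * (g1 j k * g1 (n - j) (m - k))))"
  have "S = (\<Sum>k=0..m. of_nat (m - k) * (\<Sum>j=0..n. of_nat (n choose (n - j)) * (g1 (n - j) k * g1 (n - (n - j)) (m - k))))"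
  proof -
    have inner: "(\<Sum>j=0..n. of_nat (n choose j) * (g1 j k * g1 (n - j) (m - k))) =
          (\<Sum>j=0..n. of_nat (n choose (n - j)) * (g1 (n - j) k * g1 (n - (n - j)) (m - k)))" for k
      by (rule sum.reindex_bij_witness[of _ "\<lambda>j. n - j" "\<lambda>j. n - j"]) auto
    show ?thesis unfolding S_def inner ..
  qed
  also have "\<dots> = S'"
    unfolding S'_def
    by (rule sum.reindex_bij_witness[of _ "\<lambda>k. m - k" "\<lambda>k. m - k"])
       (auto simp: binomial_symmetric[symmetric] mult_ac)
  finally have SS: "S = S'" .
  have "S + S' = (\<Sum>k=0..m. of_nat m * (\<Sum>j=0..n. of_nat (n choose j) * (g1 j k * g1 (n - j) (m - k))))"
    unfolding S_def S'_def sum.distrib[symmetric]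
    by (intro sum.cong refl) (auto simp: distrib_right[symmetric] of_nat_diff)
  also have "\<dots> = of_nat m * (\<Sum>j=0..n. of_nat (n choose j) * (\<Sum>k=0..m. g1 j k * g1 (n - j) (m - k)))"
    by (simp add: sum_distrib_left sum.swap[of _ "{0..m}"])
  also have "\<dots> = of_nat m * (2 * of_nat m ^ n * of_nat ((m + n + 1) choose m) / of_nat (n + 2))"
    by (simp only: g1_conv)
  finally have "2 * S = of_nat m * (2 * of_nat m ^ n * of_nat ((m + n + 1) choose m) / of_nat (n + 2))"
    using SS by simp
  then have "S = of_nat m ^ Suc n * of_nat ((m + Suc n) choose m) / of_nat (Suc n + 1)"
    by (simp add: field_simps)
  then show ?thesis by (simp add: S_def g1_def)
qed


definition k1 :: "(nat \<Rightarrow> nat \<times> nat) \<Rightarrow> nat \<Rightarrow> nat \<times> nat" where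
  "k1 \<phi> a = (fst (\<phi> a), a)"
definition k2 :: "(nat \<Rightarrow> nat \<times> nat) \<Rightarrow> nat \<Rightarrow> nat \<times> nat" where
  "k2 \<phi> a = (snd (\<phi> a), a)"
definition crosses :: "(nat \<Rightarrow> nat \<times> nat) \<Rightarrow> nat \<Rightarrow> nat \<Rightarrow> bool" where
  "crosses \<phi> a b \<longleftrightarrow> k1 \<phi> a < k1 \<phi> b \<and> k1 \<phi> b < k2 \<phi> a \<and> k2 \<phi> a < k2 \<phi> b"
definition ncross :: "nat set \<Rightarrow> (nat \<Rightarrow> nat \<times> nat) \<Rightarrow> bool" where
  "ncross L \<phi> \<longleftrightarrow> (\<forall>a\<in>L. \<forall>b\<in>L. \<not> crosses \<phi> a b)"
definition Obj :: "nat set \<Rightarrow> nat \<Rightarrow> (nat \<Rightarrow> nat \<times> nat) set" where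
  "Obj L m = {\<phi>. (\<forall>a. a \<notin> L \<longrightarrow> \<phi> a = (0, 0)) \<and> (\<forall>a\<in>L. fst (\<phi> a) \<le> snd (\<phi> a) \<and> snd (\<phi> a) < m) \<and> ncross L \<phi>}"

lemma finite_Obj: assumes "finite L" shows "finite (Obj L m)"
proof (rule finite_subset)
  show "Obj L m \<subseteq> {f. \<forall>x. (x \<in> L \<longrightarrow> f x \<in> {0..<m} \<times> {0..<m}) \<and> (x \<notin> L \<longrightarrow> f x = (0, 0))}"
    unfolding Obj_def by (auto simp: mem_Times_iff)
  show "finite \<dots>" by (rule finite_set_of_finite_funs) (use assms in auto)
qed

lemma Obj_empty: "Obj {} m = {\<lambda>_. (0, 0)}"
  by (auto simp: Obj_def ncross_def)

lemma ncross_subset: "ncross L \<phi> \<Longrightarrow> L' \<subseteq> L \<Longrightarrow> ncross L' \<phi>"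
  unfolding ncross_def by blast

lemma ncross_cong: "(\<And>b. b \<in> L \<Longrightarrow> \<phi> b = \<psi> b) \<Longrightarrow> ncross L \<phi> = ncross L \<psi>"
  unfolding ncross_def crosses_def k1_def k2_def by auto

lemma smono_less_iff:
  fixes h :: "nat \<Rightarrow> nat"
  assumes "strict_mono_on C h" "x \<in> C" "y \<in> C"
  shows "h x < h y \<longleftrightarrow> x < y" "h x = h y \<longleftrightarrow> x = y"
proof -
  show "h x < h y \<longleftrightarrow> x < y"
    using assms by (metis not_less_iff_gr_or_eq order.asym strict_mono_onD)
  show "h x = h y \<longleftrightarrow> x = y"
    using assms by (metis less_irrefl not_less_iff_gr_or_eq strict_mono_onD)
qed

lemma key_map_less:
  fixes h :: "nat \<Rightarrow> nat"
  assumes "strict_mono_on C h" "x \<in> C" "y \<in> C"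
  shows "((h x, a) < (h y, b)) \<longleftrightarrow> ((x, a) < (y, b))"
proof -
  have "h x \<le> h y \<longleftrightarrow> x \<le> y" using smono_less_iff[OF assms] by (auto simp: le_less)
  then show ?thesis using smono_less_iff[OF assms] by simp
qed

lemma ncross_map:
  fixes h :: "nat \<Rightarrow> nat"
  assumes h: "strict_mono_on C h"
    and C: "\<And>b. b \<in> L \<Longrightarrow> fst (\<phi> b) \<in> C \<and> snd (\<phi> b) \<in> C"
    and psi: "\<And>b. b \<in> L \<Longrightarrow> \<psi> b = (h (fst (\<phi> b)), h (snd (\<phi> b)))"
  shows "ncross L \<psi> \<longleftrightarrow> ncross L \<phi>"
proof -
  have kk: "(k1 \<psi> x < k1 \<psi> y \<longleftrightarrow> k1 \<phi> x < k1 \<phi> y) \<and> (k1 \<psi> y < k2 \<psi> x \<longleftrightarrow> k1 \<phi> y < k2 \<phi> x)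
     \<and> (k2 \<psi> x < k2 \<psi> y \<longleftrightarrow> k2 \<phi> x < k2 \<phi> y)" if "x \<in> L" "y \<in> L" for x y
  proof (intro conjI)
    show "k1 \<psi> x < k1 \<psi> y \<longleftrightarrow> k1 \<phi> x < k1 \<phi> y"
      unfolding k1_def k2_def psi[OF that(1)] psi[OF that(2)] fst_conv snd_conv
      by (rule key_map_less[OF h]) (use C that in auto)
    show "k1 \<psi> y < k2 \<psi> x \<longleftrightarrow> k1 \<phi> y < k2 \<phi> x"
      unfolding k1_def k2_def psi[OF that(1)] psi[OF that(2)] fst_conv snd_conv
      by (rule key_map_less[OF h]) (use C that in auto)
    show "k2 \<psi> x < k2 \<psi> y \<longleftrightarrow> k2 \<phi> x < k2 \<phi> y"
      unfolding k1_def k2_def psi[OF that(1)] psi[OF that(2)] fst_conv snd_conv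
      by (rule key_map_less[OF h]) (use C that in auto)
  qed
  have "crosses \<psi> x y \<longleftrightarrow> crosses \<phi> x y" if "x \<in> L" "y \<in> L" for x y
    unfolding crosses_def using kk[OF that] by simp
  then show ?thesis unfolding ncross_def by auto
qed

lemma fiber_diag:
  assumes a: "a \<in> L" and cm: "c < m"
  shows "card {\<phi> \<in> Obj L m. \<phi> a = (c, c)} = card (Obj (L - {a}) m)"
proof -
  have "bij_betw (\<lambda>\<phi>. \<phi>(a := (0, 0))) {\<phi> \<in> Obj L m. \<phi> a = (c, c)} (Obj (L - {a}) m)"
  proof (rule bij_betw_byWitness[where f'="\<lambda>\<psi>. \<psi>(a := (c, c))"])
    show "\<forall>\<phi>\<in>{\<phi> \<in> Obj L m. \<phi> a = (c, c)}. (\<phi>(a := (0, 0)))(a := (c, c)) = \<phi>"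
      by auto
    show "\<forall>\<psi>\<in>Obj (L - {a}) m. (\<psi>(a := (c, c)))(a := (0, 0)) = \<psi>"
      by (auto simp: Obj_def fun_eq_iff)
    show "(\<lambda>\<phi>. \<phi>(a := (0, 0))) ` {\<phi> \<in> Obj L m. \<phi> a = (c, c)} \<subseteq> Obj (L - {a}) m"
    proof clarify
      fix \<phi> assume p: "\<phi> \<in> Obj L m" "\<phi> a = (c, c)"
      have "ncross (L - {a}) \<phi>" using p ncross_subset unfolding Obj_def by blast
      then have "ncross (L - {a}) (\<phi>(a := (0, 0)))" by (subst ncross_cong) auto
      then show "\<phi>(a := (0, 0)) \<in> Obj (L - {a}) m" using p unfolding Obj_def by auto
    qed
    show "(\<lambda>\<psi>. \<psi>(a := (c, c))) ` Obj (L - {a}) m \<subseteq> {\<phi> \<in> Obj L m. \<phi> a = (c, c)}"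
    proof (rule image_subsetI)
      fix \<psi> assume p: "\<psi> \<in> Obj (L - {a}) m"
      have nc: "ncross (L - {a}) (\<psi>(a := (c, c)))" using p by (subst ncross_cong) (auto simp: Obj_def)
      have "ncross L (\<psi>(a := (c, c)))"
        unfolding ncross_def
      proof (intro ballI)
        fix x y assume xy: "x \<in> L" "y \<in> L"
        show "\<not> crosses (\<psi>(a := (c, c))) x y"
        proof (cases "x = a \<or> y = a")
          case True
          then show ?thesis unfolding crosses_def k1_def k2_def
            by auto
        next
          case False
          then show ?thesis using nc xy unfolding ncross_def by auto
        qed
      qed
      then show "\<psi>(a := (c, c)) \<in> {\<phi> \<in> Obj L m. \<phi> a = (c, c)}"
        using p cm a unfolding Obj_def by auto
    qed
  qed
  then show ?thesis by (rule bij_betw_same_card)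
qed

lemma io1:
  fixes P Q x1 x2 y1 y2 :: "'k::linorder"
  assumes "P < y1" "y1 \<le> y2" "y2 < Q" "x1 < P \<or> Q < x1" "x2 < P \<or> Q < x2" "x1 \<le> x2"
  shows "\<not>(x1 < y1 \<and> y1 < x2 \<and> x2 < y2) \<and> \<not>(y1 < x1 \<and> x1 < y2 \<and> y2 < x2)"
proof (intro conjI notI)
  assume h: "x1 < y1 \<and> y1 < x2 \<and> x2 < y2"
  then have "x2 < Q" using assms(3) by (meson order.strict_trans)
  then have "\<not> Q < x2" by (meson order.asym)
  then have "x2 < P" using assms(5) by blast
  moreover have "P < x2" using h assms(1) by (meson order.strict_trans)
  ultimately show False by (meson order.asym)
next
  assume h: "y1 < x1 \<and> x1 < y2 \<and> y2 < x2"
  then have "P < x1" using assms(1) by (meson order.strict_trans)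
  then have "\<not> x1 < P" by (meson order.asym)
  then have "Q < x1" using assms(4) by blast
  moreover have "x1 < Q" using h assms(3) by (meson order.strict_trans)
  ultimately show False by (meson order.asym)
qed
lemma io2:
  fixes P Q y1 y2 :: "'k::linorder"
  assumes "P < y1" "y1 \<le> y2" "y2 < Q"
  shows "\<not>(P < y1 \<and> y1 < Q \<and> Q < y2) \<and> \<not>(y1 < P \<and> P < y2 \<and> y2 < Q)"
  using assms by (meson order.asym order.strict_trans)
lemma io3:
  fixes P Q x1 x2 :: "'k::linorder"
  assumes "P < Q" "x1 < P \<or> Q < x1" "x2 < P \<or> Q < x2" "x1 \<le> x2"
  shows "\<not>(P < x1 \<and> x1 < Q \<and> Q < x2) \<and> \<not>(x1 < P \<and> P < x2 \<and> x2 < Q)"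
  using assms by (meson order.asym)

lemma fiber_off:
  assumes a: "a \<in> L" and amin: "\<forall>b\<in>L. a \<le> b"
    and c12: "c1 < c2" "c2 < m" and S: "S \<subseteq> L - {a}"
  shows "card {\<phi> \<in> Obj L m. \<phi> a = (c1, c2) \<and> {b \<in> L - {a}. c1 \<le> fst (\<phi> b) \<and> fst (\<phi> b) < c2} = S}
         = card (Obj S (c2 - c1)) * card (Obj (L - {a} - S) (m - (c2 - c1)))"
proof -
  define k where "k = c2 - c1"
  define R where "R = L - {a} - S"
  define A where "A = {\<phi> \<in> Obj L m. \<phi> a = (c1, c2) \<and> {b \<in> L - {a}. c1 \<le> fst (\<phi> b) \<and> fst (\<phi> b) < c2} = S}"
  define sq where "sq x = (if x < c1 then x else x - k)" for x
  define usq where "usq x = (if x < c1 then x else x + k)" for x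
  define inp where "inp \<phi> = (\<lambda>b. if b \<in> S then (fst (\<phi> b) - c1, snd (\<phi> b) - c1) else (0, 0))" for \<phi> :: "nat \<Rightarrow> nat \<times> nat"
  define outp where "outp \<phi> = (\<lambda>b. if b \<in> R then (sq (fst (\<phi> b)), sq (snd (\<phi> b))) else (0, 0))" for \<phi> :: "nat \<Rightarrow> nat \<times> nat"
  define glue where "glue p = (\<lambda>b. if b = a then (c1, c2) else if b \<in> S then (fst (fst p b) + c1, snd (fst p b) + c1)
      else if b \<in> R then (usq (fst (snd p b)), usq (snd (snd p b))) else (0, 0))" for p :: "(nat \<Rightarrow> nat \<times> nat) \<times> (nat \<Rightarrow> nat \<times> nat)"
  have k: "c2 = c1 + k" "k > 0" using c12 by (auto simp: k_def)
  have LSR: "L = insert a (S \<union> R)" "a \<notin> S" "a \<notin> R" "S \<inter> R = {}" using S a by (auto simp: R_def)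
  have gt: "a < b" if "b \<in> L" "b \<noteq> a" for b using amin that by force
    have K1: "c1 \<le> fst (\<phi> b) \<and> fst (\<phi> b) \<le> snd (\<phi> b) \<and> snd (\<phi> b) < c2" if "\<phi> \<in> A" "b \<in> S" for \<phi> b
  proof -
    have bL: "b \<in> L" "b \<noteq> a" using that S by auto
    have i: "c1 \<le> fst (\<phi> b)" "fst (\<phi> b) < c2" using that unfolding A_def by auto
    have le: "fst (\<phi> b) \<le> snd (\<phi> b)" using that bL unfolding A_def Obj_def by auto
    have "\<not> crosses \<phi> a b" using that bL a unfolding A_def Obj_def ncross_def by auto
    moreover have "\<phi> a = (c1, c2)" using that unfolding A_def by auto
    ultimately have "\<not> (c2 < snd (\<phi> b) \<or> c2 \<le> snd (\<phi> b) \<and> a < b)"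
      using i gt[OF bL] unfolding crosses_def k1_def k2_def by auto
    then show ?thesis using i le gt[OF bL] by auto
  qed
  have K2: "(fst (\<phi> b) < c1 \<or> c2 \<le> fst (\<phi> b)) \<and> (snd (\<phi> b) < c1 \<or> c2 \<le> snd (\<phi> b)) \<and> fst (\<phi> b) \<le> snd (\<phi> b) \<and> snd (\<phi> b) < m"
    if "\<phi> \<in> A" "b \<in> R" for \<phi> b
  proof -
    have bL: "b \<in> L" "b \<noteq> a" "b \<notin> S" using that by (auto simp: R_def)
    have o: "fst (\<phi> b) < c1 \<or> c2 \<le> fst (\<phi> b)" using that bL unfolding A_def by auto
    have le: "fst (\<phi> b) \<le> snd (\<phi> b)" "snd (\<phi> b) < m" using that bL unfolding A_def Obj_def by auto
    have "\<not> crosses \<phi> b a" using that bL a unfolding A_def Obj_def ncross_def by auto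
    moreover have "\<phi> a = (c1, c2)" using that unfolding A_def by auto
    ultimately have "fst (\<phi> b) < c1 \<Longrightarrow> \<not> (c1 \<le> snd (\<phi> b) \<and> snd (\<phi> b) < c2)"
      using gt[OF bL(1,2)] unfolding crosses_def k1_def k2_def by auto
    then show ?thesis using o le by auto
  qed
  have sqmono: "strict_mono_on {x. x < c1 \<or> c2 \<le> x} sq"
    unfolding strict_mono_on_def sq_def using k by auto
  have usqmono: "strict_mono_on UNIV usq"
    unfolding strict_mono_on_def usq_def using k by auto
  have shmono: "strict_mono_on {c1..} (\<lambda>x. x - c1)"
    unfolding strict_mono_on_def by auto
  have admono: "strict_mono_on UNIV (\<lambda>x. x + c1)"
    unfolding strict_mono_on_def by auto
  have bij: "bij_betw (\<lambda>\<phi>. (inp \<phi>, outp \<phi>)) A (Obj S k \<times> Obj R (m - k))"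
  proof (rule bij_betw_byWitness[where f'=glue])
    show "\<forall>\<phi>\<in>A. glue (inp \<phi>, outp \<phi>) = \<phi>"
    proof
      fix \<phi> assume p: "\<phi> \<in> A"
      show "glue (inp \<phi>, outp \<phi>) = \<phi>"
      proof
        fix b
        show "glue (inp \<phi>, outp \<phi>) b = \<phi> b"
        proof (cases "b = a")
          case True then show ?thesis using p by (simp add: glue_def A_def)
        next
          case ba: False
          show ?thesis
          proof (cases "b \<in> S")
            case True then show ?thesis using ba K1[OF p True] by (simp add: glue_def inp_def prod_eq_iff)
          next
            case nS: False
            show ?thesis
            proof (cases "b \<in> R")
              case True then show ?thesis using ba nS K2[OF p True] k
                by (auto simp: glue_def outp_def sq_def usq_def prod_eq_iff)
            next
              case False
              then have "b \<notin> L" using ba nS by (auto simp: R_def)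
              then show ?thesis using ba nS False p by (simp add: glue_def A_def Obj_def)
            qed
          qed
        qed
      qed
    qed
  next
    show "\<forall>p\<in>Obj S k \<times> Obj R (m - k). (inp (glue p), outp (glue p)) = p"
    proof
      fix p assume p: "p \<in> Obj S k \<times> Obj R (m - k)"
      obtain \<psi> \<chi> where pp: "p = (\<psi>, \<chi>)" by fastforce
      have \<psi>: "\<psi> \<in> Obj S k" and \<chi>: "\<chi> \<in> Obj R (m - k)" using p pp by auto
      have "inp (glue p) = \<psi>"
      proof
        fix b show "inp (glue p) b = \<psi> b"
          using \<psi> LSR by (auto simp: inp_def glue_def pp Obj_def)
      qed
      moreover have "outp (glue p) = \<chi>"
      proof
        fix b show "outp (glue p) b = \<chi> b"
          using \<chi> LSR k by (auto simp: outp_def glue_def pp Obj_def sq_def usq_def)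
      qed
      ultimately show "(inp (glue p), outp (glue p)) = p" using pp by simp
    qed
  next
    show "(\<lambda>\<phi>. (inp \<phi>, outp \<phi>)) ` A \<subseteq> Obj S k \<times> Obj R (m - k)"
    proof (rule image_subsetI)
      fix \<phi> assume p: "\<phi> \<in> A"
      have ncL: "ncross L \<phi>" using p unfolding A_def Obj_def by auto
      have "inp \<phi> \<in> Obj S k"
      proof -
        have "ncross S (inp \<phi>) \<longleftrightarrow> ncross S \<phi>"
        proof (rule ncross_map[OF shmono])
          fix b assume b: "b \<in> S"
          show "fst (\<phi> b) \<in> {c1..} \<and> snd (\<phi> b) \<in> {c1..}" using K1[OF p b] by auto
          show "inp \<phi> b = (fst (\<phi> b) - c1, snd (\<phi> b) - c1)" using b by (simp add: inp_def)
        qed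
        moreover have "ncross S \<phi>" using ncL ncross_subset S by blast
        moreover have "fst (inp \<phi> b) \<le> snd (inp \<phi> b) \<and> snd (inp \<phi> b) < k" if "b \<in> S" for b
          using K1[OF p that] k that by (auto simp: inp_def)
        moreover have "inp \<phi> b = (0, 0)" if "b \<notin> S" for b using that by (simp add: inp_def)
        ultimately show ?thesis by (auto simp: Obj_def)
      qed
      moreover have "outp \<phi> \<in> Obj R (m - k)"
      proof -
        have "ncross R (outp \<phi>) \<longleftrightarrow> ncross R \<phi>"
          by (rule ncross_map[OF sqmono]) (use K2[OF p] in \<open>auto simp: outp_def\<close>)
        moreover have "ncross R \<phi>" using ncross_subset[OF ncL, of R] by (auto simp: R_def)
        moreover have "sq (fst (\<phi> b)) \<le> sq (snd (\<phi> b)) \<and> sq (snd (\<phi> b)) < m - k" if "b \<in> R" for b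
          using K2[OF p that] k c12 by (auto simp: sq_def)
        ultimately show ?thesis by (auto simp: Obj_def outp_def)
      qed
      ultimately show "(inp \<phi>, outp \<phi>) \<in> Obj S k \<times> Obj R (m - k)" by simp
    qed
  next
    show "glue ` (Obj S k \<times> Obj R (m - k)) \<subseteq> A"
    proof (rule image_subsetI)
      fix p assume p: "p \<in> Obj S k \<times> Obj R (m - k)"
      obtain \<psi> \<chi> where pp: "p = (\<psi>, \<chi>)" by fastforce
      have \<psi>: "\<psi> \<in> Obj S k" and \<chi>: "\<chi> \<in> Obj R (m - k)" using p pp by auto
      define \<phi> where "\<phi> = glue p"
      have \<phi>a: "\<phi> a = (c1, c2)" by (simp add: \<phi>_def glue_def)
      have \<phi>S: "\<phi> b = (fst (\<psi> b) + c1, snd (\<psi> b) + c1)" if "b \<in> S" for b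
        using that LSR by (auto simp: \<phi>_def glue_def pp)
      have \<phi>R: "\<phi> b = (usq (fst (\<chi> b)), usq (snd (\<chi> b)))" if "b \<in> R" for b
        using that LSR by (auto simp: \<phi>_def glue_def pp)
      have \<phi>0: "\<phi> b = (0, 0)" if "b \<notin> L" for b
        using that LSR by (auto simp: \<phi>_def glue_def pp)
      have \<psi>c: "fst (\<psi> b) \<le> snd (\<psi> b) \<and> snd (\<psi> b) < k" if "b \<in> S" for b
        using \<psi> that by (auto simp: Obj_def)
      have \<chi>c: "fst (\<chi> b) \<le> snd (\<chi> b) \<and> snd (\<chi> b) < m - k" if "b \<in> R" for b
        using \<chi> that by (auto simp: Obj_def)
      have usq_out: "usq x < c1 \<or> c2 \<le> usq x" for x using k by (auto simp: usq_def)
      have usq_le: "x \<le> y \<Longrightarrow> usq x \<le> usq y" for x y by (auto simp: usq_def)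
      have usq_lt: "x < m - k \<Longrightarrow> usq x < m" for x using k c12 by (auto simp: usq_def)
            define P where "P = (c1, a)"
      define Q where "Q = (c2, a)"
      have PQ: "k1 \<phi> a = P" "k2 \<phi> a = Q" "P < Q" using \<phi>a c12 by (auto simp: k1_def k2_def P_def Q_def)
      have inS: "P < k1 \<phi> b \<and> k1 \<phi> b \<le> k2 \<phi> b \<and> k2 \<phi> b < Q" if "b \<in> S" for b
      proof -
        have "b \<in> L" "b \<noteq> a" using that S by auto
        then have "a < b" by (rule gt)
        then show ?thesis using \<phi>S[OF that] \<psi>c[OF that] k by (auto simp: k1_def k2_def P_def Q_def)
      qed
      have inR: "(k1 \<phi> b < P \<or> Q < k1 \<phi> b) \<and> (k2 \<phi> b < P \<or> Q < k2 \<phi> b) \<and> k1 \<phi> b \<le> k2 \<phi> b" if "b \<in> R" for b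
      proof -
        have "b \<in> L" "b \<noteq> a" using that by (auto simp: R_def)
        then have "a < b" by (rule gt)
        then show ?thesis using \<phi>R[OF that] usq_out[of "fst (\<chi> b)"] usq_out[of "snd (\<chi> b)"]
            usq_le[of "fst (\<chi> b)" "snd (\<chi> b)"] \<chi>c[OF that]
          by (auto simp: k1_def k2_def P_def Q_def)
      qed
      have ncS: "ncross S \<phi>"
      proof -
        have "ncross S \<phi> \<longleftrightarrow> ncross S \<psi>"
          by (rule ncross_map[OF admono]) (use \<phi>S in auto)
        then show ?thesis using \<psi> by (simp add: Obj_def)
      qed
      have ncR: "ncross R \<phi>"
      proof -
        have "ncross R \<phi> \<longleftrightarrow> ncross R \<chi>"
          by (rule ncross_map[OF usqmono]) (use \<phi>R in auto)
        then show ?thesis using \<chi> by (simp add: Obj_def)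
      qed
      have nc: "ncross L \<phi>"
        unfolding ncross_def
      proof (intro ballI)
        fix x y assume xy: "x \<in> L" "y \<in> L"
        have cases: "(x \<in> S \<and> y \<in> S) \<or> (x \<in> R \<and> y \<in> R) \<or> (x \<in> S \<and> y \<in> R) \<or> (x \<in> R \<and> y \<in> S)
          \<or> (x = a \<and> y \<in> S) \<or> (x \<in> S \<and> y = a) \<or> (x = a \<and> y \<in> R) \<or> (x \<in> R \<and> y = a) \<or> (x = a \<and> y = a)"
          using xy LSR by blast
        show "\<not> crosses \<phi> x y"
          using cases
        proof (elim disjE conjE)
          assume "x \<in> S" "y \<in> S" then show ?thesis using ncS unfolding ncross_def by blast
        next
          assume "x \<in> R" "y \<in> R" then show ?thesis using ncR unfolding ncross_def by blast
        next
          assume "x \<in> S" "y \<in> R" then show ?thesis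
            using io1[of P "k1 \<phi> x" "k2 \<phi> x" Q "k1 \<phi> y" "k2 \<phi> y"] inS[of x] inR[of y]
            unfolding crosses_def by blast
        next
          assume "x \<in> R" "y \<in> S" then show ?thesis
            using io1[of P "k1 \<phi> y" "k2 \<phi> y" Q "k1 \<phi> x" "k2 \<phi> x"] inS[of y] inR[of x]
            unfolding crosses_def by blast
        next
          assume "x = a" "y \<in> S" then show ?thesis
            using io2[of P "k1 \<phi> y" "k2 \<phi> y" Q] inS[of y] PQ unfolding crosses_def by auto
        next
          assume "x \<in> S" "y = a" then show ?thesis
            using io2[of P "k1 \<phi> x" "k2 \<phi> x" Q] inS[of x] PQ unfolding crosses_def by auto
        next
          assume "x = a" "y \<in> R" then show ?thesis
            using io3[of P Q "k1 \<phi> y" "k2 \<phi> y"] inR[of y] PQ unfolding crosses_def by auto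
        next
          assume "x \<in> R" "y = a" then show ?thesis
            using io3[of P Q "k1 \<phi> x" "k2 \<phi> x"] inR[of x] PQ unfolding crosses_def by auto
        next
          assume "x = a" "y = a" then show ?thesis unfolding crosses_def by auto
        qed
      qed
      have colors: "fst (\<phi> b) \<le> snd (\<phi> b) \<and> snd (\<phi> b) < m" if "b \<in> L" for b
      proof -
        have "b = a \<or> b \<in> S \<or> b \<in> R" using that LSR by blast
        then show ?thesis
        proof (elim disjE)
          assume "b = a" then show ?thesis using \<phi>a c12 by simp
        next
          assume b: "b \<in> S" then show ?thesis using \<phi>S[OF b] \<psi>c[OF b] k c12 by auto
        next
          assume b: "b \<in> R" then show ?thesis using \<phi>R[OF b] \<chi>c[OF b] usq_le usq_lt by auto
        qed
      qed
      have ins: "{b \<in> L - {a}. c1 \<le> fst (\<phi> b) \<and> fst (\<phi> b) < c2} = S"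
      proof (intro set_eqI iffI)
        fix b assume b: "b \<in> {b \<in> L - {a}. c1 \<le> fst (\<phi> b) \<and> fst (\<phi> b) < c2}"
        then have "b \<in> S \<or> b \<in> R" using LSR by blast
        then show "b \<in> S"
        proof
          assume bR: "b \<in> R"
          then have "fst (\<phi> b) < c1 \<or> c2 \<le> fst (\<phi> b)" using \<phi>R[OF bR] usq_out[of "fst (\<chi> b)"] by simp
          then show "b \<in> S" using b by auto
        qed
      next
        fix b assume b: "b \<in> S"
        then show "b \<in> {b \<in> L - {a}. c1 \<le> fst (\<phi> b) \<and> fst (\<phi> b) < c2}"
          using \<phi>S[OF b] \<psi>c[OF b] k S by auto
      qed
      show "glue p \<in> A"
        unfolding A_def \<phi>_def[symmetric] using \<phi>a \<phi>0 nc colors ins by (auto simp: Obj_def)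
    qed
  qed
  have "card A = card (Obj S k \<times> Obj R (m - k))" using bij by (rule bij_betw_same_card)
  then show ?thesis by (simp add: A_def k_def R_def card_cartesian_product)
qed

lemma card_by_fun:
  assumes "finite A" "finite V" "f ` A \<subseteq> V"
  shows "card A = (\<Sum>v\<in>V. card {x \<in> A. f x = v})"
  using sum.group[OF assms, of "\<lambda>_. 1::nat"] by simp

lemma sum_pow_card:
  fixes h :: "nat \<Rightarrow> rat"
  assumes A: "finite A"
  shows "(\<Sum>S\<in>Pow A. h (card S)) = (\<Sum>j=0..card A. of_nat (card A choose j) * h j)"
proof -
  have "(\<Sum>S\<in>Pow A. h (card S)) = (\<Sum>j\<in>{0..card A}. \<Sum>S\<in>{S \<in> Pow A. card S = j}. h (card S))"
    by (rule sum.group[symmetric]) (use A in \<open>auto intro: card_mono\<close>)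
  also have "\<dots> = (\<Sum>j\<in>{0..card A}. of_nat (card {S. S \<subseteq> A \<and> card S = j}) * h j)"
    by (intro sum.cong refl) (simp add: Pow_def)
  also have "\<dots> = (\<Sum>j=0..card A. of_nat (card A choose j) * h j)"
    using A by (simp add: n_subsets)
  finally show ?thesis .
qed

lemma Obj_rec:
  assumes L: "finite L" and a: "a \<in> L" and amin: "\<forall>b\<in>L. a \<le> b"
  shows "card (Obj L m) = m * card (Obj (L - {a}) m)
    + (\<Sum>k\<in>{1..<m}. (m - k) * (\<Sum>S\<in>Pow (L - {a}). card (Obj S k) * card (Obj (L - {a} - S) (m - k))))"
proof -
  define L' where "L' = L - {a}"
  define X where "X k = (\<Sum>S\<in>Pow L'. card (Obj S k) * card (Obj (L' - S) (m - k)))" for k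
  define Vd where "Vd = (\<lambda>c. (c, c)) ` {..<m}"
  define Vo where "Vo = (\<lambda>(k, c). (c, c + k)) ` (SIGMA k:{1..<m}. {..<m - k})"
  have fin: "finite (Obj L m)" using L by (rule finite_Obj)
  have sub: "(\<lambda>\<phi>. \<phi> a) ` Obj L m \<subseteq> Vd \<union> Vo"
  proof (rule image_subsetI)
    fix \<phi> assume p: "\<phi> \<in> Obj L m"
    obtain c1 c2 where e: "\<phi> a = (c1, c2)" by fastforce
    have c: "c1 \<le> c2" "c2 < m" using p a e unfolding Obj_def by force+
    show "\<phi> a \<in> Vd \<union> Vo"
    proof (cases "c1 = c2")
      case True then show ?thesis using c e by (auto simp: Vd_def)
    next
      case False
      then have "(c2 - c1, c1) \<in> (SIGMA k:{1..<m}. {..<m - k})" using c by auto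
      moreover have "\<phi> a = (\<lambda>(k, c). (c, c + k)) (c2 - c1, c1)" using e c by simp
      ultimately show ?thesis unfolding Vo_def by blast
    qed
  qed
  have disj: "Vd \<inter> Vo = {}" by (auto simp: Vd_def Vo_def)
  have "card (Obj L m) = (\<Sum>v\<in>Vd \<union> Vo. card {\<phi> \<in> Obj L m. \<phi> a = v})"
    by (rule card_by_fun[OF fin _ sub]) (auto simp: Vd_def Vo_def)
  also have "\<dots> = (\<Sum>v\<in>Vd. card {\<phi> \<in> Obj L m. \<phi> a = v}) + (\<Sum>v\<in>Vo. card {\<phi> \<in> Obj L m. \<phi> a = v})"
    by (rule sum.union_disjoint) (auto simp: Vd_def Vo_def disj)
  also have "(\<Sum>v\<in>Vd. card {\<phi> \<in> Obj L m. \<phi> a = v}) = m * card (Obj L' m)"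
  proof -
    have "(\<Sum>v\<in>Vd. card {\<phi> \<in> Obj L m. \<phi> a = v}) = (\<Sum>c\<in>{..<m}. card {\<phi> \<in> Obj L m. \<phi> a = (c, c)})"
      unfolding Vd_def by (subst sum.reindex) (auto simp: inj_on_def)
    also have "\<dots> = (\<Sum>c\<in>{..<m}. card (Obj L' m))"
      by (intro sum.cong refl) (simp add: fiber_diag[OF a] L'_def)
    finally show ?thesis by simp
  qed
  also have "(\<Sum>v\<in>Vo. card {\<phi> \<in> Obj L m. \<phi> a = v}) = (\<Sum>k\<in>{1..<m}. (m - k) * X k)"
  proof -
    have "(\<Sum>v\<in>Vo. card {\<phi> \<in> Obj L m. \<phi> a = v})
        = (\<Sum>p\<in>(SIGMA k:{1..<m}. {..<m - k}). card {\<phi> \<in> Obj L m. \<phi> a = (\<lambda>(k, c). (c, c + k)) p})"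
      unfolding Vo_def by (subst sum.reindex) (auto simp: inj_on_def)
    also have "\<dots> = (\<Sum>k\<in>{1..<m}. \<Sum>c\<in>{..<m - k}. card {\<phi> \<in> Obj L m. \<phi> a = (c, c + k)})"
      by (subst sum.Sigma) (auto simp: split_beta)
    also have "\<dots> = (\<Sum>k\<in>{1..<m}. \<Sum>c\<in>{..<m - k}. X k)"
    proof (intro sum.cong refl)
      fix k c assume k: "k \<in> {1..<m}" and c: "c \<in> {..<m - k}"
      define F where "F = {\<phi> \<in> Obj L m. \<phi> a = (c, c + k)}"
      have finF: "finite F" using fin by (simp add: F_def)
      have "card F = (\<Sum>S\<in>Pow L'. card {\<phi> \<in> F. {b \<in> L - {a}. c \<le> fst (\<phi> b) \<and> fst (\<phi> b) < c + k} = S})"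
        by (rule card_by_fun[OF finF]) (auto simp: L'_def L)
      also have "\<dots> = X k"
        unfolding X_def
      proof (intro sum.cong refl)
        fix S assume S: "S \<in> Pow L'"
        have "{\<phi> \<in> F. {b \<in> L - {a}. c \<le> fst (\<phi> b) \<and> fst (\<phi> b) < c + k} = S}
            = {\<phi> \<in> Obj L m. \<phi> a = (c, c + k) \<and> {b \<in> L - {a}. c \<le> fst (\<phi> b) \<and> fst (\<phi> b) < c + k} = S}"
          by (auto simp: F_def)
        moreover have "card \<dots> = card (Obj S (c + k - c)) * card (Obj (L - {a} - S) (m - (c + k - c)))"
          by (rule fiber_off[OF a amin]) (use k c S in \<open>auto simp: L'_def\<close>)
        ultimately show "card {\<phi> \<in> F. {b \<in> L - {a}. c \<le> fst (\<phi> b) \<and> fst (\<phi> b) < c + k} = S}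
            = card (Obj S k) * card (Obj (L' - S) (m - k))" by (simp add: L'_def)
      qed
      finally show "card {\<phi> \<in> Obj L m. \<phi> a = (c, c + k)} = X k" by (simp add: F_def)
    qed
    also have "\<dots> = (\<Sum>k\<in>{1..<m}. (m - k) * X k)" by simp
    finally show ?thesis .
  qed
  finally show ?thesis by (simp add: X_def L'_def)
qed

lemma g1_zero: "g1 j 0 = (if j = 0 then 1 else 0)"
  by (simp add: g1_def)

lemma g1_rec2:
  "g1 (Suc n) m = of_nat m * g1 n m
     + (\<Sum>k\<in>{1..<m}. of_nat (m - k) * (\<Sum>j=0..n. of_nat (n choose j) * (g1 j k * g1 (n - j) (m - k))))"
proof (cases "m = 0")
  case True
  then show ?thesis by (simp add: g1_def)
next
  case False
  define t where "t k = of_nat (m - k) * (\<Sum>j=0..n. of_nat (n choose j) * (g1 j k * g1 (n - j) (m - k)))" for k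
  have split: "{0..m} = insert 0 (insert m {1..<m})" using False by auto
  have "g1 (Suc n) m = (\<Sum>k\<in>{0..m}. t k)" unfolding t_def by (rule g1_rec)
  also have "\<dots> = t 0 + (t m + (\<Sum>k\<in>{1..<m}. t k))"
    unfolding split using False by (simp add: sum.insert)
  also have "t m = 0" by (simp add: t_def)
  also have "t 0 = of_nat m * g1 n m"
  proof -
    have "(\<Sum>j=0..n. of_nat (n choose j) * (g1 j 0 * g1 (n - j) m)) = (\<Sum>j=0..n. (if j = 0 then g1 n m else 0))"
      by (intro sum.cong refl) (simp add: g1_zero)
    also have "\<dots> = g1 n m" by simp
    finally show ?thesis by (simp add: t_def)
  qed
  finally show ?thesis by (simp add: t_def)
qed

lemma Obj_card: "finite L \<Longrightarrow> of_nat (card (Obj L m)) = g1 (card L) m"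
proof (induction "card L" arbitrary: L m rule: less_induct)
  case less
  show ?case
  proof (cases "L = {}")
    case True
    then show ?thesis by (simp add: Obj_empty g1_def)
  next
    case False
    define a where "a = Min L"
    have a: "a \<in> L" "\<forall>b\<in>L. a \<le> b" using False less.prems by (auto simp: a_def)
    define L' where "L' = L - {a}"
    define n where "n = card L'"
    have cL: "card L = Suc n" using a less.prems unfolding n_def L'_def
      by (metis card_Suc_Diff1)
    have finL': "finite L'" using less.prems by (simp add: L'_def)
    have IH: "of_nat (card (Obj T k)) = g1 (card T) k" if "T \<subseteq> L'" for T k
    proof -
      have "card T \<le> n" using that finL' by (simp add: n_def card_mono)
      then have "card T < card L" using cL by simp
      moreover have "finite T" using that finL' finite_subset by blast
      ultimately show ?thesis by (rule less.hyps)
    qed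
    have "of_nat (card (Obj L m)) = (of_nat (m * card (Obj L' m)
      + (\<Sum>k\<in>{1..<m}. (m - k) * (\<Sum>S\<in>Pow L'. card (Obj S k) * card (Obj (L' - S) (m - k))))) :: rat)"
      using Obj_rec[OF less.prems a] by (simp add: L'_def)
    also have "\<dots> = of_nat m * g1 n m
      + (\<Sum>k\<in>{1..<m}. of_nat (m - k) * (\<Sum>S\<in>Pow L'. g1 (card S) k * g1 (n - card S) (m - k)))"
    proof -
      have "of_nat (card (Obj S k) * card (Obj (L' - S) (m - k))) = g1 (card S) k * g1 (n - card S) (m - k)"
        if "S \<in> Pow L'" for S k
      proof -
        have "card (L' - S) = n - card S" using that finL' by (simp add: n_def card_Diff_subset finite_subset)
        then show ?thesis using IH[of S k] IH[of "L' - S" "m - k"] that by auto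
      qed
      then show ?thesis by (simp add: IH[of L' m] n_def)
    qed
    also have "\<dots> = of_nat m * g1 n m
      + (\<Sum>k\<in>{1..<m}. of_nat (m - k) * (\<Sum>j=0..n. of_nat (n choose j) * (g1 j k * g1 (n - j) (m - k))))"
      using sum_pow_card[OF finL', of "\<lambda>j. g1 j _ * g1 (n - j) _"] by (simp add: n_def)
    also have "\<dots> = g1 (card L) m" using cL g1_rec2 by simp
    finally show ?thesis .
  qed
qed


fun desc :: "nat list \<Rightarrow> nat" where
  "desc [] = 0"
| "desc [x] = 1"
| "desc (x # y # r) = (if y < x then 1 else 0) + desc (y # r)"

lemma desc_pos: "w \<noteq> [] \<Longrightarrow> desc w \<ge> 1"
  by (induction w rule: desc.induct) auto

lemma des_desc: "des w = desc w"
proof (induction w rule: desc.induct)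
  case 1
  then show ?case by (simp add: des_def)
next
  case (2 x)
  have "{i. i < length [x] \<and> (i = length [x] - 1 \<or> [x] ! i > [x] ! (i + 1))} = {0}" by auto
  then show ?case by (simp add: des_def)
next
  case (3 x y r)
  define D where "D w = {i. i < length w \<and> (i = length w - 1 \<or> w ! i > w ! (i + 1))}" for w :: "nat list"
  have "D (x # y # r) = (if y < x then {0} else {}) \<union> Suc ` D (y # r)"
  proof (rule set_eqI)
    fix i show "i \<in> D (x # y # r) \<longleftrightarrow> i \<in> (if y < x then {0} else {}) \<union> Suc ` D (y # r)"
      by (cases i) (auto simp: D_def)
  qed
  moreover have "finite (D (y # r))" by (simp add: D_def)
  ultimately have "card (D (x # y # r)) = (if y < x then 1 else 0) + card (D (y # r))"
    by (auto simp: card_image)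
  then show ?case using 3 by (simp add: des_def D_def)
qed

definition Col :: "nat list \<Rightarrow> nat \<Rightarrow> nat list set" where
  "Col w m = {f. length f = length w \<and> sorted (zip f w) \<and> (\<forall>x\<in>set f. x < m)}"

lemma sorted_zip_fst:
  assumes "length f = length w" "sorted (zip f w)"
  shows "sorted f"
proof -
  have "sorted_wrt (\<le>) (zip f w)" using assms(2) by simp
  then have "sorted_wrt (\<lambda>x y. fst x \<le> fst y) (zip f w)"
    by (rule sorted_wrt_mono_rel[rotated]) (auto simp: less_eq_prod_def)
  then have "sorted (map fst (zip f w))" by (simp add: sorted_map)
  then show ?thesis using assms(1) by simp
qed

lemma sorted_map_pairs:
  assumes "sorted xs" "\<And>x y. x \<in> set xs \<Longrightarrow> y \<in> set xs \<Longrightarrow> x \<le> y \<Longrightarrow> h x \<le> h y"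
  shows "sorted (map h xs)"
proof -
  have "sorted_wrt (\<le>) xs" using assms(1) by simp
  then have "sorted_wrt (\<lambda>x y. h x \<le> h y) xs"
    by (rule sorted_wrt_mono_rel[rotated]) (use assms(2) in auto)
  then show ?thesis by (simp add: sorted_map)
qed

lemma finite_Col: "finite (Col w m)"
proof (rule finite_subset)
  show "Col w m \<subseteq> {f. set f \<subseteq> {..<m} \<and> length f = length w}" by (auto simp: Col_def)
  show "finite {f. set f \<subseteq> {..<m} \<and> length f = length w}" by (rule finite_lists_length_eq) simp
qed

lemma Col_shift:
  assumes w: "w \<noteq> []"
  shows "card {g \<in> Col w m. s \<le> hd g} = card (Col w (m - s))"
proof (cases "s \<le> m")
  case False
  have e1: "{g \<in> Col w m. s \<le> hd g} = {}"
  proof -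
    have "hd g < m" if "g \<in> Col w m" for g
    proof -
      have "g \<noteq> []" using that w by (auto simp: Col_def)
      then show ?thesis using that by (auto simp: Col_def)
    qed
    then show ?thesis using False by fastforce
  qed
  have e2: "Col w (m - s) = {}"
  proof -
    have "m - s = 0" using False by simp
    moreover have "g \<noteq> []" if "g \<in> Col w 0" for g using that w by (auto simp: Col_def)
    ultimately show ?thesis by (fastforce simp: Col_def)
  qed
  show ?thesis unfolding e1 e2 by simp
next
  case True
  have eq: "{g \<in> Col w m. s \<le> hd g} = map (\<lambda>z. z + s) ` Col w (m - s)"
  proof (intro set_eqI iffI)
    fix g assume g: "g \<in> {g \<in> Col w m. s \<le> hd g}"
    have len: "length g = length w" and srt: "sorted (zip g w)" and lt: "\<forall>x\<in>set g. x < m"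
      using g by (auto simp: Col_def)
    have gne: "g \<noteq> []" using len w by auto
    have sg: "sorted g" using sorted_zip_fst[OF len srt] .
    have ge: "\<forall>z\<in>set g. s \<le> z"
    proof
      fix z assume z: "z \<in> set g"
      obtain u g' where "g = u # g'" using gne by (cases g) auto
      then show "s \<le> z" using g sg z by auto
    qed
    define g0 where "g0 = map (\<lambda>z. z - s) g"
    have "g = map (\<lambda>z. z + s) g0" using ge by (simp add: g0_def map_idI)
    moreover have "g0 \<in> Col w (m - s)"
    proof -
      have "zip g0 w = map (\<lambda>p. (fst p - s, snd p)) (zip g w)" by (simp add: g0_def zip_map1 split_beta)
      moreover have "sorted (map (\<lambda>p. (fst p - s, snd p)) (zip g w))"
      proof (rule sorted_map_pairs[OF srt])
        fix x y assume "x \<in> set (zip g w)" "y \<in> set (zip g w)" "x \<le> y"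
        moreover have "s \<le> fst x" using ge \<open>x \<in> set (zip g w)\<close>
          by (cases x) (auto dest: set_zip_leftD)
        moreover have "s \<le> fst y" using ge \<open>y \<in> set (zip g w)\<close>
          by (cases y) (auto dest: set_zip_leftD)
        ultimately show "(\<lambda>p. (fst p - s, snd p)) x \<le> (\<lambda>p. (fst p - s, snd p)) y"
          unfolding less_eq_prod_def by auto
      qed
      moreover have "\<forall>x\<in>set g0. x < m - s"
      proof
        fix x assume "x \<in> set g0"
        then obtain z where "z \<in> set g" "x = z - s" by (auto simp: g0_def)
        then show "x < m - s" using lt ge by force
      qed
      ultimately show ?thesis using len by (auto simp: Col_def g0_def)
    qed
    ultimately show "g \<in> map (\<lambda>z. z + s) ` Col w (m - s)" by blast
  next
    fix g assume "g \<in> map (\<lambda>z. z + s) ` Col w (m - s)"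
    then obtain g0 where g: "g = map (\<lambda>z. z + s) g0" and g0: "g0 \<in> Col w (m - s)" by blast
    have len: "length g0 = length w" and srt: "sorted (zip g0 w)" and lt: "\<forall>x\<in>set g0. x < m - s"
      using g0 by (auto simp: Col_def)
    have gne: "g0 \<noteq> []" using len w by auto
    have "zip g w = map (\<lambda>p. (fst p + s, snd p)) (zip g0 w)" by (simp add: g zip_map1 split_beta)
    moreover have "sorted (map (\<lambda>p. (fst p + s, snd p)) (zip g0 w))"
      by (rule sorted_map_pairs[OF srt]) (auto simp: less_eq_prod_def)
    ultimately have "sorted (zip g w)" by simp
    moreover have "s \<le> hd g" using gne g by (cases g0) auto
    ultimately show "g \<in> {g \<in> Col w m. s \<le> hd g}" using len lt g True by (auto simp: Col_def)
  qed
  have "inj_on (map (\<lambda>z. z + s)) (Col w (m - s))"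
    by (rule inj_onI) (simp add: inj_map_eq_map inj_def)
  then show ?thesis unfolding eq by (rule card_image)
qed

lemma Col_nil: "Col [] m = {[]}"
  by (auto simp: Col_def)

lemma Col_single: "Col [x] m = (\<lambda>v. [v]) ` {..<m}"
proof (intro set_eqI iffI)
  fix f assume "f \<in> Col [x] m"
  then obtain v where "f = [v]" "v < m" by (auto simp: Col_def length_Suc_conv)
  then show "f \<in> (\<lambda>v. [v]) ` {..<m}" by auto
qed (auto simp: Col_def)

lemma Col_cons2:
  "Col (x # y # r) m = (\<Union>v\<in>{..<m}. (Cons v) ` {g \<in> Col (y # r) m. v + (if y < x then 1 else 0) \<le> hd g})"
proof (intro set_eqI iffI)
  fix f assume f: "f \<in> Col (x # y # r) m"
  then obtain v u g' where fe: "f = v # u # g'" by (auto simp: Col_def length_Suc_conv)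
  have "(v, x) \<le> (u, y)" "sorted (zip (u # g') (y # r))" using f fe by (auto simp: Col_def)
  then have le: "v + (if y < x then 1 else 0) \<le> u" and srt: "sorted (zip (u # g') (y # r))" by auto
  have um: "u < m" using f fe by (auto simp: Col_def)
  then have vm: "v \<in> {..<m}" using le by auto
  have "u # g' \<in> {g \<in> Col (y # r) m. v + (if y < x then 1 else 0) \<le> hd g}"
    using f fe le srt by (auto simp: Col_def)
  then have "f \<in> (Cons v) ` {g \<in> Col (y # r) m. v + (if y < x then 1 else 0) \<le> hd g}"
    using fe by blast
  then show "f \<in> (\<Union>v\<in>{..<m}. (Cons v) ` {g \<in> Col (y # r) m. v + (if y < x then 1 else 0) \<le> hd g})"
    using vm by blast
next
  fix f assume "f \<in> (\<Union>v\<in>{..<m}. (Cons v) ` {g \<in> Col (y # r) m. v + (if y < x then 1 else 0) \<le> hd g})"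
  then obtain v g where v: "v < m" and fe: "f = v # g" and g: "g \<in> Col (y # r) m"
    and h: "v + (if y < x then 1 else 0) \<le> hd g" by auto
  obtain u g' where ge: "g = u # g'" using g by (cases g) (auto simp: Col_def)
  have le: "(v, x) \<le> (u, y)" using h ge by (auto split: if_splits)
  have srt: "sorted (zip (u # g') (y # r))" using g ge by (simp add: Col_def)
  have "sorted (zip (v # u # g') (x # y # r))"
    using le srt by (simp only: zip_Cons_Cons sorted2)
  then show "f \<in> Col (x # y # r) m" using g ge fe v by (auto simp: Col_def)
qed

lemma card_Col_cons2:
  "card (Col (x # y # r) m) = (\<Sum>v<m. card (Col (y # r) (m - (v + (if y < x then 1 else 0)))))"
proof -
  define e where "e = (if y < x then 1 else (0::nat))"
  define B where "B v = {g \<in> Col (y # r) m. v + e \<le> hd g}" for v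
  have "card (Col (x # y # r) m) = card (\<Union>v\<in>{..<m}. (Cons v) ` B v)"
    by (simp add: Col_cons2 B_def e_def)
  also have "\<dots> = (\<Sum>v<m. card ((Cons v) ` B v))"
    by (rule card_UN_disjoint) (auto simp: B_def finite_Col)
  also have "\<dots> = (\<Sum>v<m. card (B v))"
    by (intro sum.cong refl card_image) (simp add: inj_on_def)
  also have "\<dots> = (\<Sum>v<m. card (Col (y # r) (m - (v + e))))"
    unfolding B_def by (intro sum.cong refl Col_shift) simp
  finally show ?thesis by (simp add: e_def)
qed

lemma choose_swap: "(a + b) choose a = (a + b) choose (b :: nat)"
  using binomial_symmetric[of a "a + b"] by simp

lemma arith_sum:
  assumes d: "d \<ge> 1"
  shows "(\<Sum>v<m. (if d \<le> m - (v + e) then (m - (v + e) - d + N) choose N else 0))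
       = (if e + d \<le> m then (m - (e + d) + Suc N) choose (Suc N) else 0)"
proof (cases "e + d \<le> m")
  case False
  have "(if d \<le> m - (v + e) then (m - (v + e) - d + N) choose N else 0) = 0" if "v < m" for v
    using False d that by auto
  then show ?thesis using False by simp
next
  case True
  define T where "T = m - (e + d)"
  have Tm: "T < m" using d True by (simp add: T_def)
  have "(\<Sum>v<m. (if d \<le> m - (v + e) then (m - (v + e) - d + N) choose N else 0))
      = (\<Sum>v\<in>{0..T}. (if d \<le> m - (v + e) then (m - (v + e) - d + N) choose N else 0))"
  proof (rule sum.mono_neutral_right)
    show "\<forall>v\<in>{..<m} - {0..T}. (if d \<le> m - (v + e) then (m - (v + e) - d + N) choose N else 0) = 0"
      using True d by (auto simp: T_def)
  qed (use Tm in auto)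
  also have "\<dots> = (\<Sum>v=0..T. ((T - v + Suc N - 1) choose (T - v)))"
  proof (intro sum.cong refl)
    fix v assume v: "v \<in> {0..T}"
    then have "d \<le> m - (v + e)" "m - (v + e) - d = T - v" using True by (auto simp: T_def)
    then show "(if d \<le> m - (v + e) then (m - (v + e) - d + N) choose N else 0) = (T - v + Suc N - 1) choose (T - v)"
      using choose_swap[of N "T - v"] by (simp add: add.commute)
  qed
  also have "\<dots> = (T + Suc N) choose T" by (rule hockey)
  also have "\<dots> = (T + Suc N) choose (Suc N)" by (rule choose_swap)
  finally show ?thesis using True by (simp add: T_def)
qed

lemma Col_card: "card (Col w m) = (if desc w \<le> m then (m - desc w + length w) choose (length w) else 0)"
proof (induction w arbitrary: m rule: desc.induct)
  case 1
  then show ?case by (simp add: Col_nil)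
next
  case (2 x)
  then show ?case by (simp add: Col_single card_image inj_on_def)
next
  case (3 x y r)
  define e where "e = (if y < x then 1 else (0::nat))"
  have d: "desc (y # r) \<ge> 1" by (rule desc_pos) simp
  have "card (Col (x # y # r) m) = (\<Sum>v<m. card (Col (y # r) (m - (v + e))))"
    by (simp add: card_Col_cons2 e_def)
  also have "\<dots> = (\<Sum>v<m. (if desc (y # r) \<le> m - (v + e) then (m - (v + e) - desc (y # r) + length (y # r)) choose length (y # r) else 0))"
    by (intro sum.cong refl) (simp only: 3)
  also have "\<dots> = (if e + desc (y # r) \<le> m then (m - (e + desc (y # r)) + Suc (length (y # r))) choose (Suc (length (y # r))) else 0)"
    by (rule arith_sum[OF d])
  finally show ?case by (simp add: e_def)
qed


definition VP :: "nat \<Rightarrow> nat \<Rightarrow> (nat \<times> nat) list set" where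
  "VP n m = {p. sorted p \<and> map snd p \<in> quasi_stirling n \<and> (\<forall>x\<in>set p. fst x < m)}"

definition Mof :: "nat set \<Rightarrow> (nat \<Rightarrow> nat \<times> nat) \<Rightarrow> (nat \<times> nat) multiset" where
  "Mof L \<phi> = (\<Sum>a\<in>L. {#(fst (\<phi> a), a), (snd (\<phi> a), a)#})"

definition Cs :: "(nat \<times> nat) multiset \<Rightarrow> nat \<Rightarrow> nat set" where
  "Cs N a = {c. (c, a) \<in># N}"

definition fromM :: "nat set \<Rightarrow> (nat \<times> nat) multiset \<Rightarrow> nat \<Rightarrow> nat \<times> nat" where
  "fromM L N = (\<lambda>a. if a \<in> L then (Min (Cs N a), Max (Cs N a)) else (0, 0))"

lemma filter_Mof:
  assumes "finite L"
  shows "filter_mset (\<lambda>x. snd x = a) (Mof L \<phi>) = (if a \<in> L then {#(fst (\<phi> a), a), (snd (\<phi> a), a)#} else {#})"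
  using assms
proof (induction L rule: finite_induct)
  case empty
  then show ?case by (simp add: Mof_def)
next
  case (insert b F)
  have e: "Mof (insert b F) \<phi> = {#(fst (\<phi> b), b), (snd (\<phi> b), b)#} + Mof F \<phi>"
    using insert.hyps by (simp add: Mof_def)
  show ?case
  proof (cases "a = b")
    case True
    then show ?thesis unfolding e using insert.hyps insert.IH by simp
  next
    case False
    then show ?thesis unfolding e using insert.hyps insert.IH by simp
  qed
qed

lemma mset_eq_by_label:
  assumes "\<And>a. filter_mset (\<lambda>x. snd x = a) A = filter_mset (\<lambda>x. snd x = a) B"
  shows "A = B"
proof (rule multiset_eqI)
  fix x
  have "count (filter_mset (\<lambda>y. snd y = snd x) A) x = count (filter_mset (\<lambda>y. snd y = snd x) B) x"
    by (simp only: assms)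
  then show "count A x = count B x" by simp
qed

lemma count_image_size: "count (image_mset f N) a = size (filter_mset (\<lambda>x. f x = a) N)"
  by (induction N) auto

lemma size2: assumes "size N = 2" shows "\<exists>u v. N = {#u, v#}"
proof -
  obtain u N1 where "N = add_mset u N1" using assms size_eq_Suc_imp_eq_union[of N 1] by auto
  moreover have "size N1 = 1" using assms calculation by simp
  then obtain v N2 where "N1 = add_mset v N2" using size_eq_Suc_imp_eq_union[of N1 0] by auto
  moreover have "N2 = {#}" using \<open>size N1 = 1\<close> calculation by simp
  ultimately show ?thesis by auto
qed

lemma count_double_upt: "count (mset [1..<n+1] + mset [1..<n+1]) a = (if a \<in> {1..n} then 2 else 0)"
  by auto

lemma finite_QS: "finite (quasi_stirling n)"
proof (rule finite_subset)
  show "quasi_stirling n \<subseteq> {w. set w \<subseteq> {1..<n+1} \<and> length w = 2 * n}"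
  proof
    fix w assume w: "w \<in> quasi_stirling n"
    then have e: "mset w = mset [1..<n+1] + mset [1..<n+1]" by (simp add: quasi_stirling_def)
    have "set w = set [1..<n+1]" using arg_cong[OF e, of set_mset] by simp
    then have "set w \<subseteq> {1..<n+1}" by auto
    moreover have "length w = 2 * n" using arg_cong[OF e, of size] by simp
    ultimately show "w \<in> {w. set w \<subseteq> {1..<n+1} \<and> length w = 2 * n}" by simp
  qed
  show "finite {w. set w \<subseteq> {1..<n+1} \<and> length w = 2 * n}" by (rule finite_lists_length_eq) simp
qed

lemma VP_label:
  assumes p: "p \<in> VP n m" and a: "a \<in> {1..n}"
  shows "\<exists>c d. c \<le> d \<and> filter_mset (\<lambda>x. snd x = a) (mset p) = {#(c, a), (d, a)#}"
proof -
  have e: "mset (map snd p) = mset [1..<n+1] + mset [1..<n+1]" using p by (simp add: VP_def quasi_stirling_def)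
  have "size (filter_mset (\<lambda>x. snd x = a) (mset p)) = count (image_mset snd (mset p)) a"
    by (simp add: count_image_size)
  also have "\<dots> = 2" using e a by (simp only: mset_map[symmetric] count_double_upt) simp
  finally obtain u v where uv: "filter_mset (\<lambda>x. snd x = a) (mset p) = {#u, v#}" using size2 by blast
  have "snd u = a" "snd v = a"
    using uv by (metis (mono_tags, lifting) multiset_partition union_single_eq_member filter_mset_eq_conv add_mset_commute)+
  show ?thesis
  proof (cases "fst u \<le> fst v")
    case True
    then show ?thesis using uv \<open>snd u = a\<close> \<open>snd v = a\<close> by (intro exI[of _ "fst u"] exI[of _ "fst v"]) (cases u; cases v; auto)
  next
    case False
    then show ?thesis using uv \<open>snd u = a\<close> \<open>snd v = a\<close>
      by (intro exI[of _ "fst v"] exI[of _ "fst u"]) (cases u; cases v; auto simp: add_mset_commute)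
  qed
qed

lemma pair_msets:
  fixes x y u v :: "'a::linorder"
  assumes "{#x, y#} = {#u, v#}" "x \<le> y" "u \<le> v"
  shows "x = u \<and> y = v"
  using assms by (auto simp: add_eq_conv_ex)
lemma two_sub:
  assumes "i < k" "k < length xs"
  shows "{#xs ! i, xs ! k#} \<subseteq># mset xs"
proof -
  have xs: "xs = take k xs @ xs ! k # drop (Suc k) xs" using assms(2) by (rule id_take_nth_drop)
  have "xs ! i \<in> set (take k xs)" using assms by (simp add: in_set_conv_nth) (metis assms nth_take length_take min.absorb4 order.strict_trans)
  then have "{#xs ! i#} \<subseteq># mset (take k xs)" by simp
  moreover have "{#xs ! k#} \<subseteq># mset (xs ! k # drop (Suc k) xs)" by simp
  ultimately have "{#xs ! i#} + {#xs ! k#} \<subseteq># mset (take k xs) + mset (xs ! k # drop (Suc k) xs)"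
    by (rule subset_mset.add_mono)
  also have "\<dots> = mset xs" by (subst (3) xs) simp
  finally show ?thesis by (simp add: add_mset_commute)
qed
lemma three_sub:
  assumes "i < j" "j < k" "k < length xs"
  shows "{#xs ! i, xs ! j, xs ! k#} \<subseteq># mset xs"
proof -
  have xs: "xs = take k xs @ xs ! k # drop (Suc k) xs" using assms(3) by (rule id_take_nth_drop)
  have "{#take k xs ! i, take k xs ! j#} \<subseteq># mset (take k xs)"
    by (rule two_sub) (use assms in auto)
  then have "{#xs ! i, xs ! j#} \<subseteq># mset (take k xs)" using assms by simp
  moreover have "{#xs ! k#} \<subseteq># mset (xs ! k # drop (Suc k) xs)" by simp
  ultimately have "{#xs ! i, xs ! j#} + {#xs ! k#} \<subseteq># mset (take k xs) + mset (xs ! k # drop (Suc k) xs)"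
    by (rule subset_mset.add_mono)
  also have "\<dots> = mset xs" by (subst (3) xs) simp
  finally show ?thesis by (simp add: add_mset_commute)
qed

lemma Cs_label: "filter_mset (\<lambda>x. snd x = a) N = {#(c, a), (d, a)#} \<Longrightarrow> Cs N a = {c, d}"
proof -
  assume e: "filter_mset (\<lambda>x. snd x = a) N = {#(c, a), (d, a)#}"
  have "(c', a) \<in># N \<longleftrightarrow> (c', a) \<in># filter_mset (\<lambda>x. snd x = a) N" for c' by simp
  then show ?thesis unfolding Cs_def e by auto
qed

lemma fromM_Mof:
  assumes L: "finite L" and p: "\<phi> \<in> Obj L m"
  shows "fromM L (Mof L \<phi>) = \<phi>"
proof
  fix a show "fromM L (Mof L \<phi>) a = \<phi> a"
  proof (cases "a \<in> L")
    case True
    have "Cs (Mof L \<phi>) a = {fst (\<phi> a), snd (\<phi> a)}"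
      by (rule Cs_label) (simp add: filter_Mof[OF L] True)
    moreover have "fst (\<phi> a) \<le> snd (\<phi> a)" using p True by (simp add: Obj_def)
    ultimately show ?thesis using True by (simp add: fromM_def max_def min_def)
  next
    case False
    then show ?thesis using p by (simp add: fromM_def Obj_def)
  qed
qed

lemma VP_fromM:
  assumes p: "p \<in> VP n m" and a: "a \<in> {1..n}"
  shows "\<exists>c d. c \<le> d \<and> filter_mset (\<lambda>x. snd x = a) (mset p) = {#(c, a), (d, a)#} \<and> fromM {1..n} (mset p) a = (c, d)"
proof -
  obtain c d where cd: "c \<le> d" "filter_mset (\<lambda>x. snd x = a) (mset p) = {#(c, a), (d, a)#}"
    using VP_label[OF p a] by blast
  have "Cs (mset p) a = {c, d}" by (rule Cs_label[OF cd(2)])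
  then have "fromM {1..n} (mset p) a = (c, d)" using a cd(1) by (simp add: fromM_def max_def min_def)
  then show ?thesis using cd by blast
qed

lemma VP_nolabel:
  assumes p: "p \<in> VP n m" and a: "a \<notin> {1..n}"
  shows "filter_mset (\<lambda>x. snd x = a) (mset p) = {#}"
proof -
  have e: "mset (map snd p) = mset [1..<n+1] + mset [1..<n+1]" using p by (simp add: VP_def quasi_stirling_def)
  have "size (filter_mset (\<lambda>x. snd x = a) (mset p)) = count (image_mset snd (mset p)) a"
    by (simp add: count_image_size)
  also have "\<dots> = 0" using e a by (simp only: mset_map[symmetric] count_double_upt) simp
  finally show ?thesis by simp
qed

lemma Mof_fromM:
  assumes p: "p \<in> VP n m"
  shows "Mof {1..n} (fromM {1..n} (mset p)) = mset p"
proof (rule mset_eq_by_label)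
  fix a
  show "filter_mset (\<lambda>x. snd x = a) (Mof {1..n} (fromM {1..n} (mset p))) = filter_mset (\<lambda>x. snd x = a) (mset p)"
  proof (cases "a \<in> {1..n}")
    case True
    obtain c d where cd: "c \<le> d" "filter_mset (\<lambda>x. snd x = a) (mset p) = {#(c, a), (d, a)#}"
      "fromM {1..n} (mset p) a = (c, d)" using VP_fromM[OF p True] by blast
    show ?thesis by (subst filter_Mof) (use True cd in auto)
  next
    case False
    show ?thesis by (subst filter_Mof) (use False VP_nolabel[OF p False] in auto)
  qed
qed

lemma sorted_idx_less:
  assumes "sorted p" "i < length p" "j < length p" "p ! i < p ! j"
  shows "i < j"
proof (rule ccontr)
  assume "\<not> i < j"
  then have "p ! j \<le> p ! i" using assms by (simp add: sorted_nth_mono)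
  then show False using assms(4) by simp
qed

lemma fromM_Obj:
  assumes p: "p \<in> VP n m"
  shows "fromM {1..n} (mset p) \<in> Obj {1..n} m"
proof -
  define L where "L = {1..n :: nat}"
  define \<phi> where "\<phi> = fromM L (mset p)"
  have srt: "sorted p" and qs: "map snd p \<in> quasi_stirling n" and col: "\<forall>x\<in>set p. fst x < m"
    using p by (auto simp: VP_def)
  have lab: "fst (\<phi> a) \<le> snd (\<phi> a) \<and> (fst (\<phi> a), a) \<in> set p \<and> (snd (\<phi> a), a) \<in> set p" if "a \<in> L" for a
  proof -
    have aa: "a \<in> {1..n}" using that by (simp add: L_def)
    obtain c d where cd: "c \<le> d" "filter_mset (\<lambda>x. snd x = a) (mset p) = {#(c, a), (d, a)#}"
      "fromM {1..n} (mset p) a = (c, d)" using VP_fromM[OF p aa] by blast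
    then have cd3: "\<phi> a = (c, d)" by (simp add: \<phi>_def L_def)
    have m1: "(c, a) \<in># filter_mset (\<lambda>x. snd x = a) (mset p)" unfolding cd(2) by simp
    have m2: "(d, a) \<in># filter_mset (\<lambda>x. snd x = a) (mset p)" unfolding cd(2) by simp
    have "(c, a) \<in> set p" "(d, a) \<in> set p" using m1 m2 by auto
    then show ?thesis using cd cd3 by simp
  qed
  have nc: "ncross L \<phi>"
    unfolding ncross_def
  proof (intro ballI notI)
    fix a b assume ab: "a \<in> L" "b \<in> L" and cr: "crosses \<phi> a b"
    obtain i where i: "i < length p" "p ! i = k1 \<phi> a" using lab[OF ab(1)] by (auto simp: k1_def in_set_conv_nth)
    obtain j where j: "j < length p" "p ! j = k1 \<phi> b" using lab[OF ab(2)] by (auto simp: k1_def in_set_conv_nth)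
    obtain k where k: "k < length p" "p ! k = k2 \<phi> a" using lab[OF ab(1)] by (auto simp: k2_def in_set_conv_nth)
    obtain l where l: "l < length p" "p ! l = k2 \<phi> b" using lab[OF ab(2)] by (auto simp: k2_def in_set_conv_nth)
    have "i < j" using sorted_idx_less[OF srt i(1) j(1)] i j cr by (simp add: crosses_def)
    moreover have "j < k" using sorted_idx_less[OF srt j(1) k(1)] j k cr by (simp add: crosses_def)
    moreover have "k < l" using sorted_idx_less[OF srt k(1) l(1)] k l cr by (simp add: crosses_def)
    moreover have "map snd p ! i = map snd p ! k" "map snd p ! j = map snd p ! l"
      using i j k l by (simp_all add: k1_def k2_def)
    moreover have nq: "\<not> (\<exists>i j k l. i < j \<and> j < k \<and> k < l \<and> l < length (map snd p) \<and>
            map snd p ! i = map snd p ! k \<and> map snd p ! j = map snd p ! l)"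
      using qs unfolding quasi_stirling_def by blast
    moreover have "l < length (map snd p)" using l(1) by simp
    ultimately show False by blast
  qed
  have "\<phi> \<in> Obj L m"
    unfolding Obj_def
  proof (intro CollectI conjI allI impI ballI)
    fix a assume "a \<notin> L" then show "\<phi> a = (0, 0)" by (simp add: \<phi>_def fromM_def)
  next
    fix a assume a: "a \<in> L" then show "fst (\<phi> a) \<le> snd (\<phi> a)" using lab by blast
    show "snd (\<phi> a) < m" using lab[OF a] col by force
  qed (rule nc)
  then show ?thesis by (simp add: \<phi>_def L_def)
qed

lemma subset_size_eq: "A \<subseteq># B \<Longrightarrow> size A = size B \<Longrightarrow> A = B"
  by (metis add_diff_cancel_left' size_Diff_submset subset_mset.add_diff_inverse size_eq_0_iff_empty
      cancel_comm_monoid_add_class.diff_cancel add.right_neutral)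

lemma Mof_VP:
  assumes p: "\<phi> \<in> Obj {1..n} m"
  shows "sorted_list_of_multiset (Mof {1..n} \<phi>) \<in> VP n m"
proof -
  define L where "L = {1..n :: nat}"
  define N where "N = Mof L \<phi>"
  define p where "p = sorted_list_of_multiset N"
  have mp: "mset p = N" by (simp add: p_def)
  have srt: "sorted p" by (simp add: p_def)
  have fN: "filter_mset (\<lambda>x. snd x = a) N = (if a \<in> L then {#(fst (\<phi> a), a), (snd (\<phi> a), a)#} else {#})" for a
    unfolding N_def by (rule filter_Mof) (simp add: L_def)
  have \<phi>c: "fst (\<phi> a) \<le> snd (\<phi> a) \<and> snd (\<phi> a) < m" if "a \<in> L" for a
    using p that by (simp add: Obj_def L_def)
  have ncL: "ncross L \<phi>" using p by (simp add: Obj_def L_def)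
  have memN: "snd x \<in> L \<and> (x = (fst (\<phi> (snd x)), snd x) \<or> x = (snd (\<phi> (snd x)), snd x))" if "x \<in># N" for x
  proof -
    have "x \<in># filter_mset (\<lambda>y. snd y = snd x) N" using that by simp
    then show ?thesis unfolding fN by (auto split: if_splits)
  qed
  have col: "\<forall>x\<in>set p. fst x < m"
  proof
    fix x assume xs: "x \<in> set p"
    have xN: "x \<in># N" using xs unfolding mp[symmetric] by simp
    obtain u v where x: "x = (u, v)" by (cases x)
    have uvN: "(u, v) \<in># N" using xN unfolding x .
    have m: "v \<in> L \<and> ((u, v) = (fst (\<phi> v), v) \<or> (u, v) = (snd (\<phi> v), v))"
      using memN[OF uvN] by (simp only: snd_conv)
    then have "v \<in> L" "u = fst (\<phi> v) \<or> u = snd (\<phi> v)" by auto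
    then show "fst x < m" using \<phi>c[of v] unfolding x by auto
  qed
  have ms: "mset (map snd p) = mset [1..<n+1] + mset [1..<n+1]"
  proof (rule multiset_eqI)
    fix a
    have "count (mset (map snd p)) a = size (filter_mset (\<lambda>x. snd x = a) N)"
      by (simp add: mp count_image_size)
    also have "\<dots> = (if a \<in> {1..n} then 2 else 0)" by (simp add: fN L_def)
    finally show "count (mset (map snd p)) a = count (mset [1..<n+1] + mset [1..<n+1]) a"
      by (simp only: count_double_upt)
  qed
  have pairlab: "a \<in> L \<and> p ! i = (fst (\<phi> a), a) \<and> p ! k = (snd (\<phi> a), a)"
    if ik: "i < k" "k < length p" "snd (p ! i) = a" "snd (p ! k) = a" for i k a
  proof -
    have sub: "{#p ! i, p ! k#} \<subseteq># N" using two_sub[OF ik(1,2)] mp by simp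
    then have "filter_mset (\<lambda>x. snd x = a) {#p ! i, p ! k#} \<subseteq># filter_mset (\<lambda>x. snd x = a) N"
      by (rule multiset_filter_mono)
    then have sub2: "{#p ! i, p ! k#} \<subseteq># filter_mset (\<lambda>x. snd x = a) N" using ik by simp
    have aL: "a \<in> L"
    proof (rule ccontr)
      assume "a \<notin> L"
      then show False using sub2 fN[of a] by simp
    qed
    then have "{#p ! i, p ! k#} = {#(fst (\<phi> a), a), (snd (\<phi> a), a)#}"
      using sub2 fN[of a] by (intro subset_size_eq) auto
    moreover have "p ! i \<le> p ! k" using srt ik by (simp add: sorted_nth_mono)
    moreover have "(fst (\<phi> a), a) \<le> (snd (\<phi> a), a)" using \<phi>c[OF aL] by simp
    ultimately show ?thesis using pair_msets aL by blast
  qed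
  have qs: "map snd p \<in> quasi_stirling n"
    unfolding quasi_stirling_def
  proof (intro CollectI conjI notI)
    show "mset (map snd p) = mset [1..<n+1] + mset [1..<n+1]" by (rule ms)
  next
    assume "\<exists>i j k l. i < j \<and> j < k \<and> k < l \<and> l < length (map snd p) \<and>
            map snd p ! i = map snd p ! k \<and> map snd p ! j = map snd p ! l"
    then obtain i j k l where ijkl: "i < j" "j < k" "k < l" "l < length p"
      "snd (p ! i) = snd (p ! k)" "snd (p ! j) = snd (p ! l)" by auto
    define a where "a = snd (p ! i)"
    define b where "b = snd (p ! j)"
    have ik: "i < k" "k < length p" using ijkl by linarith+
    have jl: "j < l" "l < length p" using ijkl by linarith+
    have ia: "snd (p ! i) = a" "snd (p ! k) = a" using ijkl(5) unfolding a_def by simp_all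
    have jb: "snd (p ! j) = b" "snd (p ! l) = b" using ijkl(6) unfolding b_def by simp_all
    have A: "a \<in> L \<and> p ! i = (fst (\<phi> a), a) \<and> p ! k = (snd (\<phi> a), a)"
      by (rule pairlab[OF ik ia])
    have B: "b \<in> L \<and> p ! j = (fst (\<phi> b), b) \<and> p ! l = (snd (\<phi> b), b)"
      by (rule pairlab[OF jl jb])
    show False
    proof (cases "a = b")
      case True
      have "{#p ! i, p ! j, p ! k#} \<subseteq># N" using three_sub[of i j k p] ijkl mp by simp
      then have "filter_mset (\<lambda>x. snd x = a) {#p ! i, p ! j, p ! k#} \<subseteq># filter_mset (\<lambda>x. snd x = a) N"
        by (rule multiset_filter_mono)
      moreover have "filter_mset (\<lambda>x. snd x = a) {#p ! i, p ! j, p ! k#} = {#p ! i, p ! j, p ! k#}"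
        using True ijkl by (simp add: a_def b_def)
      ultimately have "size {#p ! i, p ! j, p ! k#} \<le> size (filter_mset (\<lambda>x. snd x = a) N)"
        by (metis size_mset_mono)
      then show False using A fN[of a] by simp
    next
      case False
      have le: "p ! i \<le> p ! j" "p ! j \<le> p ! k" "p ! k \<le> p ! l"
        using srt ijkl by (simp_all add: sorted_nth_mono)
      have "k1 \<phi> a < k1 \<phi> b" "k1 \<phi> b < k2 \<phi> a" "k2 \<phi> a < k2 \<phi> b"
        using le A B False by (auto simp: k1_def k2_def less_le)
      then have "crosses \<phi> a b" by (simp add: crosses_def)
      then show False using ncL A B unfolding ncross_def by blast
    qed
  qed
  show ?thesis using srt col qs by (simp add: VP_def p_def N_def L_def)
qed

lemma VP_Obj_card: "card (VP n m) = card (Obj {1..n} m)"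
proof (rule bij_betw_same_card)
  show "bij_betw (\<lambda>p. fromM {1..n} (mset p)) (VP n m) (Obj {1..n} m)"
  proof (rule bij_betw_byWitness[where f'="\<lambda>\<phi>. sorted_list_of_multiset (Mof {1..n} \<phi>)"])
    show "\<forall>p\<in>VP n m. sorted_list_of_multiset (Mof {1..n} (fromM {1..n} (mset p))) = p"
    proof
      fix p assume p: "p \<in> VP n m"
      then have "Mof {1..n} (fromM {1..n} (mset p)) = mset p" by (rule Mof_fromM)
      moreover have "sorted p" using p by (simp add: VP_def)
      ultimately show "sorted_list_of_multiset (Mof {1..n} (fromM {1..n} (mset p))) = p"
        by (simp add: sorted_sort_id)
    qed
    show "\<forall>\<phi>\<in>Obj {1..n} m. fromM {1..n} (mset (sorted_list_of_multiset (Mof {1..n} \<phi>))) = \<phi>"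
      by (auto simp: fromM_Mof)
    show "(\<lambda>p. fromM {1..n} (mset p)) ` VP n m \<subseteq> Obj {1..n} m"
      using fromM_Obj by blast
    show "(\<lambda>\<phi>. sorted_list_of_multiset (Mof {1..n} \<phi>)) ` Obj {1..n} m \<subseteq> VP n m"
      using Mof_VP by blast
  qed
qed


lemma sum_Col_VP: "(\<Sum>w\<in>quasi_stirling n. card (Col w m)) = card (VP n m)"
proof -
  have "(\<Sum>w\<in>quasi_stirling n. card (Col w m)) = card (SIGMA w:quasi_stirling n. Col w m)"
    by (simp add: finite_QS finite_Col)
  also have "\<dots> = card (VP n m)"
  proof (rule bij_betw_same_card)
    show "bij_betw (\<lambda>(w, f). zip f w) (SIGMA w:quasi_stirling n. Col w m) (VP n m)"
    proof (rule bij_betw_byWitness[where f'="\<lambda>p. (map snd p, map fst p)"])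
      show "\<forall>x\<in>(SIGMA w:quasi_stirling n. Col w m). (\<lambda>p. (map snd p, map fst p)) ((\<lambda>(w, f). zip f w) x) = x"
        by (auto simp: Col_def)
      show "\<forall>p\<in>VP n m. (\<lambda>(w, f). zip f w) (map snd p, map fst p) = p"
        by (simp add: zip_map_fst_snd)
      show "(\<lambda>(w, f). zip f w) ` (SIGMA w:quasi_stirling n. Col w m) \<subseteq> VP n m"
      proof
        fix p assume "p \<in> (\<lambda>(w, f). zip f w) ` (SIGMA w:quasi_stirling n. Col w m)"
        then obtain w f where p: "p = zip f w" and w: "w \<in> quasi_stirling n" and f: "f \<in> Col w m" by force
        have len: "length f = length w" using f by (simp add: Col_def)
        have "fst x < m" if "x \<in> set p" for x
        proof -
          obtain u v where x: "x = (u, v)" by (cases x)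
          have "u \<in> set f" using that p x by (auto dest: set_zip_leftD)
          then show ?thesis using f x by (auto simp: Col_def)
        qed
        then show "p \<in> VP n m" using p w f len by (auto simp: VP_def Col_def)
      qed
      show "(\<lambda>p. (map snd p, map fst p)) ` VP n m \<subseteq> (SIGMA w:quasi_stirling n. Col w m)"
        by (auto simp: VP_def Col_def zip_map_fst_snd)
    qed
  qed
  finally show ?thesis .
qed

lemma choose_aux: "d \<le> m \<Longrightarrow> (m + N - d) choose (m - d) = (m + N - d) choose (N :: nat)"
  using choose_swap[of "m - d" N] by (simp add: add.commute)

lemma Pser_pow0: "Pser 1 0 ^ k = Pser k 0"
proof (induction k)
  case 0
  then show ?case by (simp add: Pser0)
next
  case (Suc k)
  have "Pser 1 0 * Pser k 0 = Pser (k + 1) 0" using Pser_mult[where j=0 and k=k] by simp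
  then show ?case using Suc by simp
qed

lemma inverse_pow_one_minus_X:
  "inverse ((1 - fps_X :: rat fps) ^ (N + 1)) = Abs_fps (\<lambda>m. of_nat ((m + N) choose m))"
proof -
  have "inverse ((1 - fps_X :: rat fps) ^ (N + 1)) = inverse (1 - fps_X) ^ (N + 1)"
    by (rule fps_inverse_power)
  also have "inverse (1 - fps_X :: rat fps) = Pser 1 0"
    by (simp add: fps_inverse_one_minus_fps_X Pser_def)
  also have "Pser 1 0 ^ (N + 1) = Pser (N + 1) 0" by (rule Pser_pow0)
  also have "\<dots> = Abs_fps (\<lambda>m. of_nat ((m + N) choose m))" by (simp add: Pser_def)
  finally show ?thesis .
qed

lemma QS_length: "w \<in> quasi_stirling n \<Longrightarrow> length w = 2 * n"
proof -
  assume "w \<in> quasi_stirling n"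
  then have e: "mset w = mset [1..<n+1] + mset [1..<n+1]" by (simp add: quasi_stirling_def)
  show ?thesis using arg_cong[OF e, of size] by simp
qed

theorem theorem2p5:
  fixes n :: nat
  shows "Abs_fps (\<lambda>m. (of_nat m) ^ n / of_nat (n + 1) * of_nat ((m + n) choose m) :: rat)
           = Qbar n / (1 - fps_X) ^ (2 * n + 1)"
proof (rule fps_ext)
  fix m
  define P where "P = Abs_fps (\<lambda>k. of_nat ((k + 2 * n) choose k) :: rat)"
  have D0: "((1 - fps_X :: rat fps) ^ (2 * n + 1)) $ 0 \<noteq> 0" by simp
  have "Qbar n / (1 - fps_X) ^ (2 * n + 1) = Qbar n * P"
    unfolding fps_divide_unit[OF D0] P_def using inverse_pow_one_minus_X[of "2 * n"] by simp
  then have "(Qbar n / (1 - fps_X) ^ (2 * n + 1)) $ m = (\<Sum>w\<in>quasi_stirling n. (fps_X ^ des w * P) $ m)"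
    by (simp add: Qbar_def sum_distrib_right fps_sum_nth)
  also have "\<dots> = (\<Sum>w\<in>quasi_stirling n. of_nat (card (Col w m)))"
  proof (intro sum.cong refl)
    fix w assume w: "w \<in> quasi_stirling n"
    have len: "length w = 2 * n" using w by (rule QS_length)
    show "(fps_X ^ des w * P) $ m = of_nat (card (Col w m))"
      unfolding Col_card des_desc[symmetric] len
      by (simp add: fps_X_power_mult_nth P_def choose_aux not_less)
  qed
  also have "\<dots> = of_nat (card (VP n m))" by (simp only: of_nat_sum[symmetric] sum_Col_VP)
  also have "\<dots> = of_nat (card (Obj {1..n} m))" by (simp only: VP_Obj_card)
  also have "\<dots> = g1 n m" using Obj_card[of "{1..n}" m] by simp
  also have "\<dots> = Abs_fps (\<lambda>m. (of_nat m) ^ n / of_nat (n + 1) * of_nat ((m + n) choose m) :: rat) $ m"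
    by (simp add: g1_def add.commute)
  finally show "Abs_fps (\<lambda>m. (of_nat m) ^ n / of_nat (n + 1) * of_nat ((m + n) choose m) :: rat) $ m
      = (Qbar n / (1 - fps_X) ^ (2 * n + 1)) $ m" by simp
qed


end
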